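(* Let $r,s\in\widetilde{\mathbb{K}}_{sm}$. Then (i) $r\widetilde{\mathbb{K}}_{sm}+s\widetilde{\mathbb{K}}_{sm}=(|r|+|s|)\widetilde{\mathbb{K}}_{sm}=(|r|\vee|s|)\widetilde{\mathbb{K}}_{sm}$; (ii) $r\widetilde{\mathbb{K}}_{sm}\cap s\widetilde{\mathbb{K}}_{sm}=(|r|\wedge|s|)\widetilde{\mathbb{K}}_{sm}$.
   Context: Let $I=(0,1]$ and $\mathbb{K}\in\{\mathbb{R},\mathbb{C}\}$. $\widetilde{\mathbb{K}}_{sm}=\mathcal{E}_{M,sm}/\mathcal{N}_{sm}$ where $\mathcal{E}_{M,sm}$ is the set of nets $(r_\varepsilon)_{\varepsilon\in I}\in\mathbb{K}^I$ smooth in $\varepsilon$ with $|r_\varepsilon|=O(\varepsilon^{-N})$ for some $N$, and $\mathcal{N}_{sm}$ those with $|r_\varepsilon|=O(\varepsilon^m)$ for all $m$; $\widetilde{\mathbb{K}}_{co}$ is defined analogously with continuous nets, and $\tau_{sm}:\widetilde{\mathbb{K}}_{sm}\to\widetilde{\mathbb{K}}_{co}$, $[(r_\varepsilon)]\mapsto[(r_\varepsilon)]$, is a ring isomorphism. For $r=[(r_\varepsilon)_\varepsilon]$, $|r|:=\tau_{sm}^{-1}([(|r_\varepsilon|)_\varepsilon])\in\widetilde{\mathbb{R}}_{sm}\subseteq\widetilde{\mathbb{K}}_{sm}$. For $a,b\in\widetilde{\mathbb{R}}_{sm}$: $a\vee b=\tau_{sm}^{-1}([(\max(a_\varepsilon,b_\varepsilon))_\varepsilon])$,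 $a\wedge b=\tau_{sm}^{-1}([(\min(a_\varepsilon,b_\varepsilon))_\varepsilon])$. *)

theory Defs
  imports "HOL-Analysis.Analysis"
begin

text \<open>Nets are functions real => 'a; only their values on I = (0,1] matter.\<close>

definition Iset :: "real set" where "Iset = {0<..1}"

text \<open>C-infinity on I (one-sided derivatives at the endpoint 1).\<close>
definition smooth_net :: "(real \<Rightarrow> 'a::real_normed_vector) \<Rightarrow> bool" where
  "smooth_net f \<longleftrightarrow> (\<exists>D::nat \<Rightarrow> real \<Rightarrow> 'a. (\<forall>t\<in>Iset. D 0 t = f t) \<and>
     (\<forall>n. \<forall>t\<in>Iset. (D n has_vector_derivative D (Suc n) t) (at t within Iset)))"

definition moderate_net :: "(real \<Rightarrow> 'a::real_normed_vector) \<Rightarrow> bool" where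
  "moderate_net f \<longleftrightarrow> (\<exists>N::nat. \<exists>C. eventually (\<lambda>e. norm (f e) \<le> C * (1 / e) ^ N) (at_right 0))"

definition negligible_net :: "(real \<Rightarrow> 'a::real_normed_vector) \<Rightarrow> bool" where
  "negligible_net f \<longleftrightarrow> (\<forall>m::nat. \<exists>C. eventually (\<lambda>e. norm (f e) \<le> C * e ^ m) (at_right 0))"

definition EM_sm :: "(real \<Rightarrow> 'a::real_normed_vector) set" where
  "EM_sm = {f. smooth_net f \<and> moderate_net f}"

definition EM_co :: "(real \<Rightarrow> 'a::real_normed_vector) set" where
  "EM_co = {f. continuous_on Iset f \<and> moderate_net f}"

definition cls_sm :: "(real \<Rightarrow> 'a::real_normed_vector) \<Rightarrow> (real \<Rightarrow> 'a) set" where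
  "cls_sm f = {g \<in> EM_sm. negligible_net (\<lambda>e. g e - f e)}"

definition cls_co :: "(real \<Rightarrow> 'a::real_normed_vector) \<Rightarrow> (real \<Rightarrow> 'a) set" where
  "cls_co f = {g \<in> EM_co. negligible_net (\<lambda>e. g e - f e)}"

definition K_sm :: "(real \<Rightarrow> 'a::real_normed_vector) set set" where
  "K_sm = cls_sm ` EM_sm"

definition K_co :: "(real \<Rightarrow> 'a::real_normed_vector) set set" where
  "K_co = cls_co ` EM_co"

definition rep :: "(real \<Rightarrow> 'a) set \<Rightarrow> real \<Rightarrow> 'a" where
  "rep A = (SOME f. f \<in> A)"

definition gadd :: "(real \<Rightarrow> 'a::real_normed_field) set \<Rightarrow> (real \<Rightarrow> 'a) set \<Rightarrow> (real \<Rightarrow> 'a) set" where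
  "gadd A B = cls_sm (\<lambda>e. rep A e + rep B e)"

definition gmult :: "(real \<Rightarrow> 'a::real_normed_field) set \<Rightarrow> (real \<Rightarrow> 'a) set \<Rightarrow> (real \<Rightarrow> 'a) set" where
  "gmult A B = cls_sm (\<lambda>e. rep A e * rep B e)"

definition tau_sm :: "(real \<Rightarrow> 'a::real_normed_vector) set \<Rightarrow> (real \<Rightarrow> 'a) set" where
  "tau_sm A = cls_co (rep A)"

definition tau_sm_inv :: "(real \<Rightarrow> 'a::real_normed_vector) set \<Rightarrow> (real \<Rightarrow> 'a) set" where
  "tau_sm_inv B = (THE A. A \<in> K_sm \<and> tau_sm A = B)"

definition gabs :: "(real \<Rightarrow> 'a::real_normed_field) set \<Rightarrow> (real \<Rightarrow> 'a) set" where
  "gabs A = tau_sm_inv (cls_co (\<lambda>e. of_real (norm (rep A e))))"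

text \<open>A real-valued representative of an element of R~_sm (viewed in K~_sm).\<close>
definition rrep :: "(real \<Rightarrow> 'a::real_normed_field) set \<Rightarrow> real \<Rightarrow> real" where
  "rrep A = (SOME f. (\<lambda>e. of_real (f e)) \<in> A)"

definition gsup :: "(real \<Rightarrow> 'a::real_normed_field) set \<Rightarrow> (real \<Rightarrow> 'a) set \<Rightarrow> (real \<Rightarrow> 'a) set" where
  "gsup a b = tau_sm_inv (cls_co (\<lambda>e. of_real (max (rrep a e) (rrep b e))))"

definition ginf :: "(real \<Rightarrow> 'a::real_normed_field) set \<Rightarrow> (real \<Rightarrow> 'a) set \<Rightarrow> (real \<Rightarrow> 'a) set" where
  "ginf a b = tau_sm_inv (cls_co (\<lambda>e. of_real (min (rrep a e) (rrep b e))))"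

definition principal :: "(real \<Rightarrow> 'a::real_normed_field) set \<Rightarrow> (real \<Rightarrow> 'a) set set" where
  "principal r = {gmult r x | x. x \<in> K_sm}"

definition ideal_sum :: "(real \<Rightarrow> 'a::real_normed_field) set set \<Rightarrow> (real \<Rightarrow> 'a) set set \<Rightarrow> (real \<Rightarrow> 'a) set set" where
  "ideal_sum I J = {gadd a b | a b. a \<in> I \<and> b \<in> J}"

end

theory Submission
  imports Defs
begin


definition dv :: "(real \<Rightarrow> 'a::real_normed_vector) \<Rightarrow> (real \<Rightarrow> 'a) \<Rightarrow> bool" where
  "dv f g \<longleftrightarrow> (\<forall>t\<in>Iset. (f has_vector_derivative g t) (at t within Iset))"

lemma dv_cong:
  assumes "dv f g" "\<forall>t\<in>Iset. f t = f2 t" "\<forall>t\<in>Iset. g t = g2 t"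
  shows "dv f2 g2"
  unfolding dv_def
proof
  fix t assume t: "t \<in> Iset"
  have "(f has_vector_derivative g t) (at t within Iset)" using assms(1) t by (auto simp: dv_def)
  then have "(f2 has_vector_derivative g t) (at t within Iset)"
    by (rule has_vector_derivative_transform_within[where d=1]) (use t assms(2) in auto)
  then show "(f2 has_vector_derivative g2 t) (at t within Iset)" using assms(3) t by simp
qed

lemma smooth_coind:
  assumes "P f" and step: "\<And>g. P g \<Longrightarrow> \<exists>g'. dv g g' \<and> P g'"
  shows "smooth_net f"
proof -
  define st where "st g = (SOME g'. dv g g' \<and> P g')" for g
  have st: "dv g (st g) \<and> P (st g)" if "P g" for g
    using someI_ex[OF step[OF that]] by (simp add: st_def)
  define D where "D n = (st ^^ n) f" for n
  have PD: "P (D n)" for n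
    by (induction n) (auto simp: D_def assms(1) st)
  have "dv (D n) (D (Suc n))" for n using st[OF PD[of n]] by (simp add: D_def)
  then show ?thesis unfolding smooth_net_def dv_def
    by (intro exI[of _ D]) (auto simp: D_def)
qed

lemma smooth_unfold:
  assumes "smooth_net f" shows "\<exists>g. dv f g \<and> smooth_net g"
proof -
  obtain D where D0: "\<forall>t\<in>Iset. D 0 t = f t" and DS: "\<forall>n. \<forall>t\<in>Iset. (D n has_vector_derivative D (Suc n) t) (at t within Iset)"
    using assms unfolding smooth_net_def by blast
  have "dv (D 0) (D 1)" using DS by (simp add: dv_def)
  then have "dv f (D 1)" by (rule dv_cong) (use D0 in auto)
  moreover have "smooth_net (D 1)" unfolding smooth_net_def
    by (intro exI[of _ "\<lambda>n. D (Suc n)"]) (use DS in auto)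
  ultimately show ?thesis by blast
qed

definition sd :: "(real \<Rightarrow> 'a::real_normed_vector) \<Rightarrow> (real \<Rightarrow> 'a)" where
  "sd f = (SOME g. dv f g \<and> smooth_net g)"

lemma sd: "smooth_net f \<Longrightarrow> dv f (sd f) \<and> smooth_net (sd f)"
  using someI_ex[OF smooth_unfold] by (simp add: sd_def)

lemma smooth_cong: "smooth_net f \<Longrightarrow> \<forall>t\<in>Iset. f t = g t \<Longrightarrow> smooth_net g"
  unfolding smooth_net_def by auto

lemma smooth_const: "smooth_net (\<lambda>t. c)"
  unfolding smooth_net_def
  by (intro exI[of _ "\<lambda>n t. if n = 0 then c else 0"]) auto

lemma smooth_id: "smooth_net (\<lambda>t::real. t)"
  unfolding smooth_net_def
  by (intro exI[of _ "\<lambda>n t. if n = 0 then t else if n = 1 then 1 else 0"]) auto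

lemma smooth_add:
  assumes "smooth_net a" "smooth_net b" shows "smooth_net (\<lambda>t. a t + b t)"
proof -
  obtain D where D0: "\<forall>t\<in>Iset. D 0 t = a t" and DS: "\<forall>n. \<forall>t\<in>Iset. (D n has_vector_derivative D (Suc n) t) (at t within Iset)"
    using assms(1) unfolding smooth_net_def by blast
  obtain E where E0: "\<forall>t\<in>Iset. E 0 t = b t" and ES: "\<forall>n. \<forall>t\<in>Iset. (E n has_vector_derivative E (Suc n) t) (at t within Iset)"
    using assms(2) unfolding smooth_net_def by blast
  show ?thesis unfolding smooth_net_def
    by (intro exI[of _ "\<lambda>n t. D n t + E n t"]) (use D0 E0 DS ES in \<open>auto intro!: has_vector_derivative_add\<close>)
qed

lemma smooth_lin:
  assumes "bounded_linear L" "smooth_net a" shows "smooth_net (\<lambda>t. L (a t))"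
proof -
  obtain D where D0: "\<forall>t\<in>Iset. D 0 t = a t" and DS: "\<forall>n. \<forall>t\<in>Iset. (D n has_vector_derivative D (Suc n) t) (at t within Iset)"
    using assms(2) unfolding smooth_net_def by blast
  show ?thesis unfolding smooth_net_def
    by (intro exI[of _ "\<lambda>n t. L (D n t)"]) (use D0 DS in \<open>auto intro!: bounded_linear.has_vector_derivative[OF assms(1)]\<close>)
qed

lemma smooth_mult:
  fixes a b :: "real \<Rightarrow> 'a::real_normed_algebra"
  assumes "smooth_net a" "smooth_net b" shows "smooth_net (\<lambda>t. a t * b t)"
proof -
  define P where "P g \<longleftrightarrow> (\<exists>ps. (\<forall>p\<in>set ps. smooth_net (fst p) \<and> smooth_net (snd p)) \<and>
      (\<forall>t\<in>Iset. g t = (\<Sum>p\<leftarrow>ps. fst p t * snd p t)))" for g :: "real \<Rightarrow> 'a"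
  have "P (\<lambda>t. a t * b t)" unfolding P_def using assms by (intro exI[of _ "[(a,b)]"]) auto
  then show ?thesis
  proof (rule smooth_coind)
    fix g assume "P g"
    then obtain ps where ps: "\<forall>p\<in>set ps. smooth_net (fst p) \<and> smooth_net (snd p)"
      and g: "\<forall>t\<in>Iset. g t = (\<Sum>p\<leftarrow>ps. fst p t * snd p t)" unfolding P_def by blast
    define ps' where "ps' = concat (map (\<lambda>p. [(fst p, sd (snd p)), (sd (fst p), snd p)]) ps)"
    have der: "((\<lambda>t. \<Sum>p\<leftarrow>qs. fst p t * snd p t) has_vector_derivative
        (\<Sum>p\<leftarrow>concat (map (\<lambda>p. [(fst p, sd (snd p)), (sd (fst p), snd p)]) qs). fst p t * snd p t)) (at t within Iset)"
      if "t \<in> Iset" "set qs \<subseteq> set ps" for t qs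
      using that(2)
    proof (induction qs)
      case Nil then show ?case by simp
    next
      case (Cons q qs)
      have q: "smooth_net (fst q)" "smooth_net (snd q)" using Cons.prems ps by auto
      have d1: "(fst q has_vector_derivative sd (fst q) t) (at t within Iset)"
        using sd[OF q(1)] that(1) by (auto simp: dv_def)
      have d2: "(snd q has_vector_derivative sd (snd q) t) (at t within Iset)"
        using sd[OF q(2)] that(1) by (auto simp: dv_def)
      have IH: "((\<lambda>t. \<Sum>p\<leftarrow>qs. fst p t * snd p t) has_vector_derivative
        (\<Sum>p\<leftarrow>concat (map (\<lambda>p. [(fst p, sd (snd p)), (sd (fst p), snd p)]) qs). fst p t * snd p t)) (at t within Iset)"
        using Cons by auto
      have "((\<lambda>t. fst q t * snd q t + (\<Sum>p\<leftarrow>qs. fst p t * snd p t)) has_vector_derivative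
        ((fst q t * sd (snd q) t + sd (fst q) t * snd q t) + (\<Sum>p\<leftarrow>concat (map (\<lambda>p. [(fst p, sd (snd p)), (sd (fst p), snd p)]) qs). fst p t * snd p t))) (at t within Iset)"
        by (intro has_vector_derivative_add has_vector_derivative_mult d1 d2 IH)
      then show ?case by (simp add: add.assoc)
    qed
    have "dv g (\<lambda>t. \<Sum>p\<leftarrow>ps'. fst p t * snd p t)"
      by (rule dv_cong[of "\<lambda>t. \<Sum>p\<leftarrow>ps. fst p t * snd p t"]) (use der g in \<open>auto simp: dv_def ps'_def\<close>)
    moreover have "P (\<lambda>t. \<Sum>p\<leftarrow>ps'. fst p t * snd p t)"
      unfolding P_def using ps sd by (intro exI[of _ ps']) (auto simp: ps'_def)
    ultimately show "\<exists>g'. dv g g' \<and> P g'" by blast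
  qed
qed

lemma smooth_comp:
  fixes f :: "real \<Rightarrow> real" and H :: "(real \<Rightarrow> real) set"
  assumes f: "smooth_net f" and fU: "\<forall>t\<in>Iset. f t \<in> U"
    and hH: "\<And>h. h \<in> H \<Longrightarrow> \<exists>h'\<in>H. \<forall>x\<in>U. (h has_real_derivative h' x) (at x)"
    and h: "h \<in> H"
  shows "smooth_net (\<lambda>t. h (f t))"
proof -
  define hd where "hd h = (SOME h'. h' \<in> H \<and> (\<forall>x\<in>U. (h has_real_derivative h' x) (at x)))" for h
  have hd: "hd h \<in> H \<and> (\<forall>x\<in>U. (h has_real_derivative hd h x) (at x))" if "h \<in> H" for h
    using someI_ex[OF hH[OF that, unfolded Bex_def]] by (simp add: hd_def)
  define f' where "f' = sd f"
  have f': "dv f f'" "smooth_net f'" using sd[OF f] by (auto simp: f'_def)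
  define P where "P g \<longleftrightarrow> (\<exists>ps. (\<forall>p\<in>set ps. smooth_net (fst p) \<and> snd p \<in> H) \<and>
      (\<forall>t\<in>Iset. g t = (\<Sum>p\<leftarrow>ps. fst p t * snd p (f t))))" for g :: "real \<Rightarrow> real"
  have "P (\<lambda>t. h (f t))" unfolding P_def using h smooth_const[of 1] by (intro exI[of _ "[(\<lambda>_. 1, h)]"]) auto
  then show ?thesis
  proof (rule smooth_coind)
    fix g assume "P g"
    then obtain ps where ps: "\<forall>p\<in>set ps. smooth_net (fst p) \<and> snd p \<in> H"
      and g: "\<forall>t\<in>Iset. g t = (\<Sum>p\<leftarrow>ps. fst p t * snd p (f t))" unfolding P_def by blast
    define F where "F = (\<lambda>p::(real\<Rightarrow>real)\<times>(real\<Rightarrow>real). [(sd (fst p), snd p), (\<lambda>t. fst p t * f' t, hd (snd p))])"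
    define ps' where "ps' = concat (map F ps)"
    have der: "((\<lambda>t. \<Sum>p\<leftarrow>qs. fst p t * snd p (f t)) has_vector_derivative
        (\<Sum>p\<leftarrow>concat (map F qs). fst p t * snd p (f t))) (at t within Iset)"
      if t: "t \<in> Iset" and "set qs \<subseteq> set ps" for t qs
      using that(2)
    proof (induction qs)
      case Nil then show ?case by simp
    next
      case (Cons q qs)
      have q: "smooth_net (fst q)" "snd q \<in> H" using Cons.prems ps by auto
      have d1: "(fst q has_vector_derivative sd (fst q) t) (at t within Iset)"
        using sd[OF q(1)] t by (auto simp: dv_def)
      have df: "(f has_real_derivative f' t) (at t within Iset)"
        using f'(1) t by (auto simp: dv_def has_real_derivative_iff_has_vector_derivative)
      have dh: "(snd q has_real_derivative hd (snd q) (f t)) (at (f t))"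
        using hd[OF q(2)] fU t by auto
      have d2: "((\<lambda>t. snd q (f t)) has_vector_derivative hd (snd q) (f t) * f' t) (at t within Iset)"
        using DERIV_chain2[OF dh df] by (simp add: has_real_derivative_iff_has_vector_derivative)
      have IH: "((\<lambda>t. \<Sum>p\<leftarrow>qs. fst p t * snd p (f t)) has_vector_derivative
        (\<Sum>p\<leftarrow>concat (map F qs). fst p t * snd p (f t))) (at t within Iset)"
        using Cons by auto
      have "((\<lambda>t. fst q t * snd q (f t) + (\<Sum>p\<leftarrow>qs. fst p t * snd p (f t))) has_vector_derivative
        ((fst q t * (hd (snd q) (f t) * f' t) + sd (fst q) t * snd q (f t)) + (\<Sum>p\<leftarrow>concat (map F qs). fst p t * snd p (f t)))) (at t within Iset)"
        by (intro has_vector_derivative_add has_vector_derivative_mult d1 d2 IH)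
      then show ?case by (simp add: F_def algebra_simps)
    qed
    have "dv g (\<lambda>t. \<Sum>p\<leftarrow>ps'. fst p t * snd p (f t))"
      by (rule dv_cong[of "\<lambda>t. \<Sum>p\<leftarrow>ps. fst p t * snd p (f t)"]) (use der g in \<open>auto simp: dv_def ps'_def\<close>)
    moreover have "P (\<lambda>t. \<Sum>p\<leftarrow>ps'. fst p t * snd p (f t))"
      unfolding P_def using ps sd hd f'(2) by (intro exI[of _ ps']) (auto simp: ps'_def F_def intro!: smooth_mult)
    ultimately show "\<exists>g'. dv g g' \<and> P g'" by blast
  qed
qed

lemma smooth_powr:
  fixes f :: "real \<Rightarrow> real"
  assumes "smooth_net f" "\<forall>t\<in>Iset. f t > 0"
  shows "smooth_net (\<lambda>t. f t powr p)"
proof -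
  define H where "H = range (\<lambda>(c,q). \<lambda>x::real. c * x powr q)"
  have "smooth_net (\<lambda>t. (\<lambda>x. 1 * x powr p) (f t))"
  proof (rule smooth_comp[where U="{0<..}" and H=H and f=f and h="\<lambda>x. 1 * x powr p"])
    fix h assume "h \<in> H"
    then obtain c q where h: "h = (\<lambda>x. c * x powr q)" by (auto simp: H_def)
    show "\<exists>h'\<in>H. \<forall>x\<in>{0<..}. (h has_real_derivative h' x) (at x)"
      by (rule bexI[of _ "\<lambda>x. (c*q) * x powr (q-1)"])
        (auto simp: h H_def intro!: derivative_eq_intros has_real_derivative_powr)
  next
    show "(\<lambda>x. 1 * x powr p) \<in> H" unfolding H_def by (rule range_eqI[of _ _ "(1,p)"]) simp
  qed (use assms in \<open>auto simp: H_def\<close>)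
  then show ?thesis by simp
qed

lemma smooth_exp:
  fixes f :: "real \<Rightarrow> real"
  assumes "smooth_net f"
  shows "smooth_net (\<lambda>t. exp (f t))"
proof -
  define H where "H = range (\<lambda>c. \<lambda>x::real. c * exp x)"
  have "smooth_net (\<lambda>t. (\<lambda>x. 1 * exp x) (f t))"
  proof (rule smooth_comp[where U="UNIV" and H=H and f=f and h="\<lambda>x. 1 * exp x"])
    fix h assume "h \<in> H"
    then obtain c where h: "h = (\<lambda>x. c * exp x)" by (auto simp: H_def)
    show "\<exists>h'\<in>H. \<forall>x\<in>UNIV. (h has_real_derivative h' x) (at x)"
      by (rule bexI[of _ h]) (auto simp: h H_def intro!: derivative_eq_intros)
  next
    show "(\<lambda>x. 1 * exp x) \<in> H" unfolding H_def by (rule range_eqI[of _ _ 1]) simp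
  qed (use assms in \<open>auto simp: H_def\<close>)
  then show ?thesis by simp
qed


lemma exp_ge_term: "x \<ge> 0 \<Longrightarrow> x ^ m / fact m \<le> exp (x::real)"
proof -
  assume x: "x \<ge> 0"
  have "x ^ m / fact m \<le> (\<Sum>n\<le>m. x ^ n / fact n)"
    by (rule member_le_sum[where f="\<lambda>n. x ^ n / fact n"]) (use x in auto)
  also have "\<dots> \<le> exp x"
    using x summable_exp_generic[of x]
    by (auto simp: exp_def divide_inverse ac_simps intro!: sum_le_suminf)
  finally show ?thesis .
qed

lemma moderate_pos: "moderate_net f \<longleftrightarrow> (\<exists>N::nat. \<exists>C>0. eventually (\<lambda>e. norm (f e) \<le> C * (1 / e) ^ N) (at_right 0))"
proof
  assume "moderate_net f"
  then obtain N C where ev: "eventually (\<lambda>e. norm (f e) \<le> C * (1 / e) ^ N) (at_right 0)"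
    by (auto simp: moderate_net_def)
  have "eventually (\<lambda>e. norm (f e) \<le> (\<bar>C\<bar>+1) * (1 / e) ^ N) (at_right 0)"
    using ev eventually_at_right_less[of 0]
  proof eventually_elim
    case (elim e)
    have "C * (1/e)^N \<le> (\<bar>C\<bar>+1) * (1/e)^N" using elim by (intro mult_right_mono) auto
    then show ?case using elim by linarith
  qed
  then show "\<exists>N::nat. \<exists>C>0. eventually (\<lambda>e. norm (f e) \<le> C * (1 / e) ^ N) (at_right 0)"
    by (intro exI[of _ N] exI[of _ "\<bar>C\<bar>+1"]) auto
qed (auto simp: moderate_net_def)

lemma negligible_pos: "negligible_net f \<longleftrightarrow> (\<forall>m::nat. \<exists>C>0. eventually (\<lambda>e. norm (f e) \<le> C * e ^ m) (at_right 0))"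
proof
  assume "negligible_net f"
  show "\<forall>m::nat. \<exists>C>0. eventually (\<lambda>e. norm (f e) \<le> C * e ^ m) (at_right 0)"
  proof
    fix m
    obtain C where ev: "eventually (\<lambda>e. norm (f e) \<le> C * e ^ m) (at_right 0)"
      using \<open>negligible_net f\<close> by (auto simp: negligible_net_def)
    have "eventually (\<lambda>e. norm (f e) \<le> (\<bar>C\<bar>+1) * e ^ m) (at_right 0)"
      using ev eventually_at_right_less[of 0]
    proof eventually_elim
      case (elim e)
      have "C * e^m \<le> (\<bar>C\<bar>+1) * e^m" using elim by (intro mult_right_mono) auto
      then show ?case using elim by linarith
    qed
    then show "\<exists>C>0. eventually (\<lambda>e. norm (f e) \<le> C * e ^ m) (at_right 0)"
      by (intro exI[of _ "\<bar>C\<bar>+1"]) auto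
  qed
qed (auto simp: negligible_net_def)

lemma ev_lt1: "eventually (\<lambda>e::real. 0 < e \<and> e < 1) (at_right 0)"
proof -
  have "eventually (\<lambda>e::real. e < 1) (at_right 0)"
    unfolding eventually_at_right[OF zero_less_one] by (intro exI[of _ 1]) auto
  then show ?thesis using eventually_at_right_less[of 0] by (auto elim: eventually_elim2)
qed

lemma moderate_le:
  assumes "moderate_net f" "eventually (\<lambda>e. norm (g e) \<le> norm (f e)) (at_right 0)"
  shows "moderate_net g"
proof -
  obtain N C where ev: "eventually (\<lambda>e. norm (f e) \<le> C * (1 / e) ^ N) (at_right 0)"
    using assms(1) by (auto simp: moderate_net_def)
  have "eventually (\<lambda>e. norm (g e) \<le> C * (1 / e) ^ N) (at_right 0)"
    using ev assms(2) by eventually_elim auto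
  then show ?thesis by (auto simp: moderate_net_def)
qed

lemma negligible_le:
  assumes "negligible_net f" "eventually (\<lambda>e. norm (g e) \<le> norm (f e)) (at_right 0)"
  shows "negligible_net g"
  unfolding negligible_net_def
proof
  fix m
  obtain C where ev: "eventually (\<lambda>e. norm (f e) \<le> C * e ^ m) (at_right 0)"
    using assms(1) by (auto simp: negligible_net_def)
  have "eventually (\<lambda>e. norm (g e) \<le> C * e ^ m) (at_right 0)"
    using ev assms(2) by eventually_elim auto
  then show "\<exists>C. eventually (\<lambda>e. norm (g e) \<le> C * e ^ m) (at_right 0)" by blast
qed

lemma moderate_const: "moderate_net (\<lambda>e. c)"
  unfolding moderate_net_def by (intro exI[of _ 0] exI[of _ "norm c"]) auto

lemma negligible_zero: "negligible_net (\<lambda>e. 0)"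
  unfolding negligible_net_def by (auto intro!: exI[of _ 0])

lemma moderate_add:
  assumes "moderate_net f" "moderate_net g"
  shows "moderate_net (\<lambda>e. f e + g e)"
proof -
  obtain N C where C: "C > 0" and ev: "eventually (\<lambda>e. norm (f e) \<le> C * (1 / e) ^ N) (at_right 0)"
    using assms(1) by (auto simp: moderate_pos)
  obtain N' C' where C': "C' > 0" and ev': "eventually (\<lambda>e. norm (g e) \<le> C' * (1 / e) ^ N') (at_right 0)"
    using assms(2) by (auto simp: moderate_pos)
  have "eventually (\<lambda>e. norm (f e + g e) \<le> (C + C') * (1 / e) ^ max N N') (at_right 0)"
    using ev ev' ev_lt1
  proof eventually_elim
    case (elim e)
    have ge1: "1 \<le> 1/e" using elim by auto
    have "(1/e)^N \<le> (1/e)^max N N'" "(1/e)^N' \<le> (1/e)^max N N'"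
      by (intro power_increasing ge1; simp)+
    then have "C * (1/e)^N \<le> C * (1/e)^max N N'" "C' * (1/e)^N' \<le> C' * (1/e)^max N N'"
      using C C' by auto
    then show ?case using elim norm_triangle_ineq[of "f e" "g e"] by (simp add: algebra_simps)
  qed
  then show ?thesis by (auto simp: moderate_net_def)
qed

lemma negligible_add:
  assumes "negligible_net f" "negligible_net g"
  shows "negligible_net (\<lambda>e. f e + g e)"
  unfolding negligible_net_def
proof
  fix m
  obtain C where ev: "eventually (\<lambda>e. norm (f e) \<le> C * e ^ m) (at_right 0)"
    using assms(1) by (auto simp: negligible_net_def)
  obtain C' where ev': "eventually (\<lambda>e. norm (g e) \<le> C' * e ^ m) (at_right 0)"
    using assms(2) by (auto simp: negligible_net_def)
  have "eventually (\<lambda>e. norm (f e + g e) \<le> (C + C') * e ^ m) (at_right 0)"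
    using ev ev'
  proof eventually_elim
    case (elim e)
    then show ?case using norm_triangle_ineq[of "f e" "g e"] by (simp add: distrib_right)
  qed
  then show "\<exists>C. eventually (\<lambda>e. norm (f e + g e) \<le> C * e ^ m) (at_right 0)" by blast
qed

lemma negligible_uminus: "negligible_net f \<Longrightarrow> negligible_net (\<lambda>e. - f e)"
  unfolding negligible_net_def by simp

lemma negligible_diff:
  assumes "negligible_net f" "negligible_net g"
  shows "negligible_net (\<lambda>e. f e - g e)"
  using negligible_add[OF assms(1) negligible_uminus[OF assms(2)]] by simp

lemma moderate_mult:
  fixes f g :: "real \<Rightarrow> 'a::real_normed_algebra"
  assumes "moderate_net f" "moderate_net g"
  shows "moderate_net (\<lambda>e. f e * g e)"
proof -
  obtain N C where C: "C > 0" and ev: "eventually (\<lambda>e. norm (f e) \<le> C * (1 / e) ^ N) (at_right 0)"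
    using assms(1) by (auto simp: moderate_pos)
  obtain N' C' where C': "C' > 0" and ev': "eventually (\<lambda>e. norm (g e) \<le> C' * (1 / e) ^ N') (at_right 0)"
    using assms(2) by (auto simp: moderate_pos)
  have "eventually (\<lambda>e. norm (f e * g e) \<le> (C * C') * (1 / e) ^ (N + N')) (at_right 0)"
    using ev ev' eventually_at_right_less[of 0]
  proof eventually_elim
    case (elim e)
    have "norm (f e * g e) \<le> norm (f e) * norm (g e)" by (rule norm_mult_ineq)
    also have "\<dots> \<le> (C * (1 / e) ^ N) * (C' * (1 / e) ^ N')"
      by (intro mult_mono elim) (use elim C in auto)
    finally show ?case by (simp add: power_add algebra_simps)
  qed
  then show ?thesis by (auto simp: moderate_net_def)
qed

lemma negligible_mult:
  fixes f g :: "real \<Rightarrow> 'a::real_normed_algebra"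
  assumes "negligible_net f" "moderate_net g"
  shows "negligible_net (\<lambda>e. f e * g e)"
  unfolding negligible_net_def
proof
  fix m
  obtain N' C' where C': "C' > 0" and ev': "eventually (\<lambda>e. norm (g e) \<le> C' * (1 / e) ^ N') (at_right 0)"
    using assms(2) by (auto simp: moderate_pos)
  obtain C where C: "C > 0" and ev: "eventually (\<lambda>e. norm (f e) \<le> C * e ^ (m + N')) (at_right 0)"
    using assms(1) by (auto simp: negligible_pos)
  have "eventually (\<lambda>e. norm (f e * g e) \<le> (C * C') * e ^ m) (at_right 0)"
    using ev ev' eventually_at_right_less[of 0]
  proof eventually_elim
    case (elim e)
    have "norm (f e * g e) \<le> norm (f e) * norm (g e)" by (rule norm_mult_ineq)
    also have "\<dots> \<le> (C * e ^ (m + N')) * (C' * (1 / e) ^ N')"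
      by (intro mult_mono elim) (use elim C in auto)
    also have "\<dots> = (C * C') * e ^ m" using elim
      by (simp add: power_add power_one_over field_simps)
    finally show ?case .
  qed
  then show "\<exists>C. eventually (\<lambda>e. norm (f e * g e) \<le> C * e ^ m) (at_right 0)" by blast
qed

lemma negligible_mult':
  fixes f g :: "real \<Rightarrow> 'a::real_normed_field"
  assumes "moderate_net f" "negligible_net g"
  shows "negligible_net (\<lambda>e. f e * g e)"
proof -
  have "negligible_net (\<lambda>e. g e * f e)" by (rule negligible_mult[OF assms(2,1)])
  then show ?thesis
    by (rule negligible_le) (auto intro!: always_eventually simp: norm_mult mult.commute)
qed

lemma negligible_moderate: "negligible_net f \<Longrightarrow> moderate_net f"
  unfolding negligible_net_def moderate_net_def
proof -
  assume "\<forall>m::nat. \<exists>C. eventually (\<lambda>e. norm (f e) \<le> C * e ^ m) (at_right 0)"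
  then obtain C where "eventually (\<lambda>e. norm (f e) \<le> C * e ^ 0) (at_right 0)" by blast
  then show "\<exists>N::nat. \<exists>C. eventually (\<lambda>e. norm (f e) \<le> C * (1 / e) ^ N) (at_right 0)"
    by (intro exI[of _ 0] exI[of _ C]) simp
qed

lemma negligible_gamma: "negligible_net (\<lambda>e::real. exp (- 1 / e))"
  unfolding negligible_net_def
proof
  fix m
  have "eventually (\<lambda>e. norm (exp (- 1 / e)) \<le> fact m * e ^ m) (at_right 0)"
    using eventually_at_right_less[of 0]
  proof eventually_elim
    case (elim e)
    have "(1/e) ^ m / fact m \<le> exp (1/e)" by (rule exp_ge_term) (use elim in auto)
    then have "(1/e)^m \<le> fact m * exp (1/e)" by (simp add: divide_le_eq mult.commute)
    then have "(1/e)^m * e^m \<le> fact m * exp (1/e) * e^m" using elim by (intro mult_right_mono) auto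
    then have "1 \<le> fact m * exp (1/e) * e^m" using elim by (simp add: power_one_over)
    then have "exp (-1/e) \<le> exp (-1/e) * (fact m * exp (1/e) * e^m)" by simp
    also have "\<dots> = fact m * e^m" by (simp add: exp_minus field_simps)
    finally show ?case by simp
  qed
  then show "\<exists>C. eventually (\<lambda>e. norm (exp (- 1 / e)) \<le> C * e ^ m) (at_right 0)" by blast
qed


lemma EM_smI: "smooth_net f \<Longrightarrow> moderate_net f \<Longrightarrow> f \<in> EM_sm"
  by (simp add: EM_sm_def)

lemma EM_smD: "f \<in> EM_sm \<Longrightarrow> smooth_net f \<and> moderate_net f"
  by (simp add: EM_sm_def)

lemma EM_sm_mult:
  fixes f g :: "real \<Rightarrow> 'a::real_normed_field"
  shows "f \<in> EM_sm \<Longrightarrow> g \<in> EM_sm \<Longrightarrow> (\<lambda>e. f e * g e) \<in> EM_sm"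
  by (auto simp: EM_sm_def intro: smooth_mult moderate_mult)

lemma EM_sm_add:
  shows "f \<in> EM_sm \<Longrightarrow> g \<in> EM_sm \<Longrightarrow> (\<lambda>e. f e + g e) \<in> EM_sm"
  by (auto simp: EM_sm_def intro: smooth_add moderate_add)

lemma EM_sm_co: "f \<in> EM_sm \<Longrightarrow> f \<in> EM_co"
proof -
  assume f: "f \<in> EM_sm"
  then have "dv f (sd f)" using sd by (auto simp: EM_sm_def)
  then have "continuous_on Iset f"
    by (intro continuous_on_vector_derivative) (auto simp: dv_def)
  then show ?thesis using f by (auto simp: EM_sm_def EM_co_def)
qed

lemma negl_trans:
  "negligible_net (\<lambda>e. f e - g e) \<Longrightarrow> negligible_net (\<lambda>e. g e - h e) \<Longrightarrow> negligible_net (\<lambda>e. f e - h e)"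
  using negligible_add[of "\<lambda>e. f e - g e" "\<lambda>e. g e - h e"] by simp

lemma negl_sym:
  "negligible_net (\<lambda>e. f e - g e) \<Longrightarrow> negligible_net (\<lambda>e. g e - f e)"
  using negligible_uminus[of "\<lambda>e. f e - g e"] by simp

lemma negl_refl: "negligible_net (\<lambda>e. f e - f e)"
  using negligible_zero by simp

lemma cls_eq: "negligible_net (\<lambda>e. f e - g e) \<Longrightarrow> cls_sm f = cls_sm g"
  unfolding cls_sm_def by (auto intro: negl_trans negl_sym)

lemma cls_co_eq: "negligible_net (\<lambda>e. f e - g e) \<Longrightarrow> cls_co f = cls_co g"
  unfolding cls_co_def by (auto intro: negl_trans negl_sym)

lemma cls_self: "f \<in> EM_sm \<Longrightarrow> f \<in> cls_sm f"
  unfolding cls_sm_def using negl_refl by auto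

lemma cls_mem: "k \<in> cls_sm f \<Longrightarrow> k \<in> EM_sm \<and> negligible_net (\<lambda>e. k e - f e)"
  unfolding cls_sm_def by auto

lemma rep_cls: "f \<in> EM_sm \<Longrightarrow> rep (cls_sm f) \<in> cls_sm f"
  unfolding rep_def by (rule someI[of "\<lambda>x. x \<in> cls_sm f"]) (rule cls_self)

lemma rep_cls': "f \<in> EM_sm \<Longrightarrow> rep (cls_sm f) \<in> EM_sm \<and> negligible_net (\<lambda>e. rep (cls_sm f) e - f e)"
  using rep_cls cls_mem by blast

lemma K_sm_rep: "A \<in> K_sm \<Longrightarrow> rep A \<in> EM_sm \<and> A = cls_sm (rep A)"
proof -
  assume "A \<in> K_sm"
  then obtain f where f: "f \<in> EM_sm" "A = cls_sm f" by (auto simp: K_sm_def)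
  have r: "rep A \<in> EM_sm" "negligible_net (\<lambda>e. rep A e - f e)" using rep_cls'[OF f(1)] f(2) by auto
  then show ?thesis using cls_eq[OF r(2)] f(2) by simp
qed

lemma cls_in_K: "f \<in> EM_sm \<Longrightarrow> cls_sm f \<in> K_sm"
  by (simp add: K_sm_def)

lemma cls_eqD: "cls_sm f = cls_sm g \<Longrightarrow> f \<in> EM_sm \<Longrightarrow> negligible_net (\<lambda>e. f e - g e)"
  using cls_self cls_mem by metis

lemma gmult_cls:
  fixes f g :: "real \<Rightarrow> 'a::real_normed_field"
  assumes f: "f \<in> EM_sm" and g: "g \<in> EM_sm"
  shows "gmult (cls_sm f) (cls_sm g) = cls_sm (\<lambda>e. f e * g e)"
proof -
  define f' where "f' = rep (cls_sm f)"
  define g' where "g' = rep (cls_sm g)"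
  have f': "f' \<in> EM_sm" "negligible_net (\<lambda>e. f' e - f e)" using rep_cls'[OF f] by (auto simp: f'_def)
  have g': "g' \<in> EM_sm" "negligible_net (\<lambda>e. g' e - g e)" using rep_cls'[OF g] by (auto simp: g'_def)
  have "negligible_net (\<lambda>e. (f' e - f e) * g' e + f e * (g' e - g e))"
    by (intro negligible_add negligible_mult negligible_mult' f'(2) g'(2))
      (use f g' in \<open>auto simp: EM_sm_def\<close>)
  then have "negligible_net (\<lambda>e. f' e * g' e - f e * g e)" by (simp add: algebra_simps)
  then show ?thesis unfolding gmult_def f'_def[symmetric] g'_def[symmetric] by (rule cls_eq)
qed

lemma gadd_cls:
  fixes f g :: "real \<Rightarrow> 'a::real_normed_field"
  assumes f: "f \<in> EM_sm" and g: "g \<in> EM_sm"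
  shows "gadd (cls_sm f) (cls_sm g) = cls_sm (\<lambda>e. f e + g e)"
proof -
  define f' where "f' = rep (cls_sm f)"
  define g' where "g' = rep (cls_sm g)"
  have f': "negligible_net (\<lambda>e. f' e - f e)" using rep_cls'[OF f] by (auto simp: f'_def)
  have g': "negligible_net (\<lambda>e. g' e - g e)" using rep_cls'[OF g] by (auto simp: g'_def)
  have "negligible_net (\<lambda>e. (f' e - f e) + (g' e - g e))"
    by (intro negligible_add f' g')
  then have "negligible_net (\<lambda>e. (f' e + g' e) - (f e + g e))" by (simp add: algebra_simps)
  then show ?thesis unfolding gadd_def f'_def[symmetric] g'_def[symmetric] by (rule cls_eq)
qed

lemma principal_cls:
  fixes f :: "real \<Rightarrow> 'a::real_normed_field"
  assumes f: "f \<in> EM_sm"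
  shows "principal (cls_sm f) = {cls_sm (\<lambda>e. f e * x e) | x. x \<in> EM_sm}"
  unfolding principal_def K_sm_def using gmult_cls[OF f] by auto

lemma ideal_sum_cls:
  fixes f g :: "real \<Rightarrow> 'a::real_normed_field"
  assumes f: "f \<in> EM_sm" and g: "g \<in> EM_sm"
  shows "ideal_sum (principal (cls_sm f)) (principal (cls_sm g)) =
    {cls_sm (\<lambda>e. f e * x e + g e * y e) | x y. x \<in> EM_sm \<and> y \<in> EM_sm}"
  unfolding ideal_sum_def principal_cls[OF f] principal_cls[OF g]
proof (intro equalityI subsetI)
  fix X assume "X \<in> {gadd a b |a b. a \<in> {cls_sm (\<lambda>e. f e * x e) |x. x \<in> EM_sm} \<and> b \<in> {cls_sm (\<lambda>e. g e * x e) |x. x \<in> EM_sm}}"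
  then obtain x y where xy: "x \<in> EM_sm" "y \<in> EM_sm" and X: "X = gadd (cls_sm (\<lambda>e. f e * x e)) (cls_sm (\<lambda>e. g e * y e))"
    by blast
  have "X = cls_sm (\<lambda>e. f e * x e + g e * y e)"
    unfolding X by (rule gadd_cls) (intro EM_sm_mult f g xy)+
  then show "X \<in> {cls_sm (\<lambda>e. f e * x e + g e * y e) | x y. x \<in> EM_sm \<and> y \<in> EM_sm}" using xy by blast
next
  fix X assume "X \<in> {cls_sm (\<lambda>e. f e * x e + g e * y e) | x y. x \<in> EM_sm \<and> y \<in> EM_sm}"
  then obtain x y where xy: "x \<in> EM_sm" "y \<in> EM_sm" and X: "X = cls_sm (\<lambda>e. f e * x e + g e * y e)"
    by blast
  have "X = gadd (cls_sm (\<lambda>e. f e * x e)) (cls_sm (\<lambda>e. g e * y e))"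
    unfolding X by (rule gadd_cls[symmetric]) (intro EM_sm_mult f g xy)+
  then show "X \<in> {gadd a b |a b. a \<in> {cls_sm (\<lambda>e. f e * x e) |x. x \<in> EM_sm} \<and> b \<in> {cls_sm (\<lambda>e. g e * x e) |x. x \<in> EM_sm}}"
    using xy by blast
qed

lemma prin_sub:
  fixes f g u :: "real \<Rightarrow> 'a::real_normed_field"
  assumes f: "f \<in> EM_sm" and g: "g \<in> EM_sm" and u: "u \<in> EM_sm"
    and n: "negligible_net (\<lambda>e. f e - g e * u e)"
  shows "principal (cls_sm f) \<subseteq> principal (cls_sm g)"
proof
  fix X assume "X \<in> principal (cls_sm f)"
  then obtain x where x: "x \<in> EM_sm" and X: "X = cls_sm (\<lambda>e. f e * x e)"
    using principal_cls[OF f] by auto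
  have "negligible_net (\<lambda>e. (f e - g e * u e) * x e)"
    by (rule negligible_mult[OF n]) (use x in \<open>auto simp: EM_sm_def\<close>)
  then have "negligible_net (\<lambda>e. f e * x e - g e * (u e * x e))" by (simp add: algebra_simps)
  then have "X = cls_sm (\<lambda>e. g e * (u e * x e))" unfolding X by (rule cls_eq)
  then show "X \<in> principal (cls_sm g)" using principal_cls[OF g] EM_sm_mult[OF u x] by auto
qed

lemma tau_inv:
  fixes g h :: "real \<Rightarrow> 'a::real_normed_vector"
  assumes g: "g \<in> EM_sm" and n: "negligible_net (\<lambda>e. g e - h e)"
  shows "tau_sm_inv (cls_co h) = cls_sm g"
  unfolding tau_sm_inv_def
proof (rule the_equality)
  have "negligible_net (\<lambda>e. rep (cls_sm g) e - h e)"
    using rep_cls'[OF g] n negl_trans by blast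
  then show "cls_sm g \<in> K_sm \<and> tau_sm (cls_sm g) = cls_co h"
    using cls_in_K[OF g] cls_co_eq by (auto simp: tau_sm_def)
next
  fix A assume A: "A \<in> K_sm \<and> tau_sm A = cls_co h"
  then have rA: "rep A \<in> EM_sm" "A = cls_sm (rep A)" using K_sm_rep by auto
  have "rep A \<in> cls_co (rep A)" using EM_sm_co[OF rA(1)] negl_refl by (auto simp: cls_co_def)
  then have "rep A \<in> cls_co h" using A by (simp add: tau_sm_def)
  then have "negligible_net (\<lambda>e. rep A e - h e)" by (simp add: cls_co_def)
  then have "negligible_net (\<lambda>e. rep A e - g e)" using negl_trans negl_sym n by blast
  then show "A = cls_sm g" using rA(2) cls_eq by metis
qed

lemma rrep_cls:
  fixes a :: "real \<Rightarrow> real"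
  assumes a: "(\<lambda>e. of_real (a e) :: 'a::real_normed_field) \<in> EM_sm"
  shows "negligible_net (\<lambda>e. rrep (cls_sm (\<lambda>e. of_real (a e) :: 'a)) e - a e)"
proof -
  define f where "f = rrep (cls_sm (\<lambda>e. of_real (a e) :: 'a))"
  have "(\<lambda>e. of_real (f e) :: 'a) \<in> cls_sm (\<lambda>e. of_real (a e))"
    unfolding f_def rrep_def by (rule someI[of _ a]) (rule cls_self[OF a])
  then have "negligible_net (\<lambda>e. (of_real (f e) :: 'a) - of_real (a e))" using cls_mem by blast
  then have "negligible_net (\<lambda>e. f e - a e)"
    by (rule negligible_le) (auto intro!: always_eventually simp flip: of_real_diff)
  then show ?thesis by (simp add: f_def)
qed



lemma sq_bounds:
  fixes x g :: real assumes g: "g > 0"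
  shows "\<bar>x\<bar> \<le> sqrt (x^2 + g^2)" "g \<le> sqrt (x^2 + g^2)" "sqrt (x^2 + g^2) \<le> \<bar>x\<bar> + g" "sqrt (x^2 + g^2) > 0"
proof -
  show "\<bar>x\<bar> \<le> sqrt (x^2 + g^2)" by (rule real_le_rsqrt) simp
  show "g \<le> sqrt (x^2 + g^2)" by (rule real_le_rsqrt) simp
  show "sqrt (x^2 + g^2) \<le> \<bar>x\<bar> + g"
    by (rule real_le_lsqrt) (use g in \<open>auto simp: power2_eq_square algebra_simps\<close>)
  show "sqrt (x^2 + g^2) > 0" using g by (intro real_sqrt_gt_zero add_nonneg_pos) auto
qed

lemma key_mq:
  fixes m q :: real assumes "m \<ge> 0" "q > 0"
  shows "m * q^2 / (m^2 + q^2) \<le> q" "q * m / (m^2 + q^2) \<le> 1"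
proof -
  have p: "m^2 + q^2 > 0" using assms by (simp add: add_nonneg_pos)
  have "2*(m*q) \<le> m^2 + q^2" using sum_squares_bound[of m q] by (simp add: power2_eq_square mult.assoc)
  have "m^2 - m*q + q^2 \<ge> 0" using \<open>2*(m*q) \<le> m^2 + q^2\<close> zero_le_power2[of m] zero_le_power2[of q] by linarith
  then have "q * (m^2 - m*q + q^2) \<ge> 0" using assms by simp
  then have "m * q^2 \<le> q * (m^2 + q^2)" by (simp add: power2_eq_square algebra_simps)
  then show "m * q^2 / (m^2 + q^2) \<le> q" using p by (simp add: divide_le_eq)
  have "0 \<le> q * m" using assms by simp
  then have "q * m \<le> m^2 + q^2" using \<open>2*(m*q) \<le> m^2 + q^2\<close> by (simp add: mult.commute)
  then show "q * m / (m^2 + q^2) \<le> 1" using p by (simp add: divide_le_eq)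
qed

lemma key2:
  fixes m q K nn g Y :: real
  assumes m: "m > 0" and q: "q > 0" and K: "K \<ge> 0" and nn: "nn \<ge> 0" and g: "g \<ge> 0"
    and gq: "g \<le> q" and nq: "nn \<le> q" and Y: "Y \<ge> 0" "Y \<le> (m + g) * K + nn"
  shows "Y * q^2 / (m^2 + q^2) \<le> K * q + g * K + nn" "Y * m / (m^2 + q^2) \<le> 2 * K + 1"
proof -
  have p: "m^2 + q^2 > 0" using q by (simp add: add_nonneg_pos)
  note b = key_mq[OF less_imp_le[OF m] q]
  have f1: "q^2 / (m^2 + q^2) \<le> 1" using p by (simp add: divide_le_eq)
  have "Y * q^2 / (m^2 + q^2) \<le> ((m + g) * K + nn) * q^2 / (m^2 + q^2)"
    using Y p by (intro divide_right_mono mult_right_mono) auto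
  also have "\<dots> = K * (m * q^2 / (m^2 + q^2)) + (g * K + nn) * (q^2 / (m^2 + q^2))"
    using p by (simp add: add_divide_distrib distrib_left distrib_right mult_ac)
  also have "\<dots> \<le> K * q + (g * K + nn) * 1"
    using b(1) f1 K g nn by (intro add_mono mult_left_mono) auto
  finally show "Y * q^2 / (m^2 + q^2) \<le> K * q + g * K + nn" by simp
  have f2: "m * m / (m^2 + q^2) \<le> 1" using p q by (simp add: divide_le_eq power2_eq_square)
  have f3: "g * m / (m^2 + q^2) \<le> 1"
  proof -
    have "g * m / (m^2 + q^2) \<le> q * m / (m^2 + q^2)" using gq m p by (intro divide_right_mono mult_right_mono) auto
    then show ?thesis using b(2) by linarith
  qed
  have f4: "nn * m / (m^2 + q^2) \<le> 1"
  proof -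
    have "nn * m / (m^2 + q^2) \<le> q * m / (m^2 + q^2)" using nq m p by (intro divide_right_mono mult_right_mono) auto
    then show ?thesis using b(2) by linarith
  qed
  have "Y * m / (m^2 + q^2) \<le> ((m + g) * K + nn) * m / (m^2 + q^2)"
    using Y p m by (intro divide_right_mono mult_right_mono) auto
  also have "\<dots> = K * (m * m / (m^2 + q^2)) + K * (g * m / (m^2 + q^2)) + nn * m / (m^2 + q^2)"
    using p by (simp add: add_divide_distrib distrib_left distrib_right mult_ac)
  also have "\<dots> \<le> K * 1 + K * 1 + 1"
    using f2 f3 f4 K by (intro add_mono mult_left_mono) auto
  finally show "Y * m / (m^2 + q^2) \<le> 2 * K + 1" by simp
qed

lemma Mm_bounds:
  fixes A B g :: real
  assumes g: "g > 0" and A: "g \<le> A" and B: "g \<le> B"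
  defines "sq \<equiv> sqrt ((A - B)^2 + g^2)"
  shows "max A B \<le> (A + B + sq) / 2" "(A + B + sq) / 2 \<le> max A B + g / 2"
    "min A B - g / 2 \<le> (A + B - sq) / 2" "(A + B - sq) / 2 \<le> min A B"
    "(A + B - sq) / 2 \<ge> g / 2"
proof -
  note s = sq_bounds[OF g, of "A - B", folded sq_def]
  show "max A B \<le> (A + B + sq) / 2" "(A + B + sq) / 2 \<le> max A B + g / 2"
    "min A B - g / 2 \<le> (A + B - sq) / 2" "(A + B - sq) / 2 \<le> min A B"
    "(A + B - sq) / 2 \<ge> g / 2"
    using s A B by (cases "A \<le> B"; simp add: max_def min_def abs_if split: if_splits; linarith)+
qed



definition gam :: "real \<Rightarrow> real" where "gam e = exp (- 1 / e)"

definition absn :: "(real \<Rightarrow> 'a::real_normed_vector) \<Rightarrow> real \<Rightarrow> real" where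
  "absn R e = sqrt ((norm (R e))^2 + (gam e)^2)"

definition Mx :: "(real \<Rightarrow> real) \<Rightarrow> (real \<Rightarrow> real) \<Rightarrow> real \<Rightarrow> real" where
  "Mx A B e = (A e + B e + sqrt ((A e - B e)^2 + (gam e)^2)) / 2"

definition Mn :: "(real \<Rightarrow> real) \<Rightarrow> (real \<Rightarrow> real) \<Rightarrow> real \<Rightarrow> real" where
  "Mn A B e = (A e + B e - sqrt ((A e - B e)^2 + (gam e)^2)) / 2"

lemma gam_pos: "gam e > 0" by (simp add: gam_def)

lemma gam_sq_pos: "(gam e)^2 > 0" by (simp add: gam_def)

lemma absn_bounds:
  "norm (R e) \<le> absn R e" "gam e \<le> absn R e" "absn R e \<le> norm (R e) + gam e" "absn R e > 0"
  "(absn R e)^2 = (norm (R e))^2 + (gam e)^2"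
  using sq_bounds[OF gam_pos[of e], of "norm (R e)"] by (auto simp: absn_def)

lemma absn_diff: "\<bar>absn R e - norm (R e)\<bar> \<le> gam e"
  using absn_bounds[where R=R and e=e] by linarith

lemma Mx_bounds:
  assumes "gam e \<le> A e" "gam e \<le> B e"
  shows "max (A e) (B e) \<le> Mx A B e" "Mx A B e \<le> max (A e) (B e) + gam e / 2"
  using Mm_bounds[OF gam_pos assms] by (auto simp: Mx_def)

lemma Mn_bounds:
  assumes "gam e \<le> A e" "gam e \<le> B e"
  shows "min (A e) (B e) - gam e / 2 \<le> Mn A B e" "Mn A B e \<le> min (A e) (B e)" "gam e / 2 \<le> Mn A B e"
  using Mm_bounds[OF gam_pos assms] by (auto simp: Mn_def)

lemma smooth_gam: "smooth_net gam"
proof -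
  have "smooth_net (\<lambda>e::real. e powr -1)" by (rule smooth_powr[OF smooth_id]) (auto simp: Iset_def)
  then have "smooth_net (\<lambda>e. (-1) * e powr -1)" by (rule smooth_mult[OF smooth_const])
  then have "smooth_net (\<lambda>e. exp ((-1) * e powr -1))" by (rule smooth_exp)
  then show ?thesis by (rule smooth_cong) (auto simp: Iset_def gam_def powr_neg_one)
qed

lemma negligible_gam: "negligible_net gam"
  using negligible_gamma by (simp add: gam_def[abs_def])

lemma moderate_gam: "moderate_net gam"
  by (rule negligible_moderate[OF negligible_gam])

lemma smooth_diff: "smooth_net a \<Longrightarrow> smooth_net b \<Longrightarrow> smooth_net (\<lambda>t. a t - b t)"
  using smooth_add[of a "\<lambda>t. - b t"] smooth_lin[OF bounded_linear_minus[OF bounded_linear_ident], of b]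
  by simp

lemma smooth_sqrt: "smooth_net (u::real\<Rightarrow>real) \<Longrightarrow> \<forall>t\<in>Iset. u t > 0 \<Longrightarrow> smooth_net (\<lambda>t. sqrt (u t))"
proof -
  assume u: "smooth_net u" "\<forall>t\<in>Iset. u t > 0"
  have "smooth_net (\<lambda>t. u t powr (1/2))" by (rule smooth_powr[OF u])
  then show ?thesis by (rule smooth_cong) (use u in \<open>auto simp: powr_half_sqrt less_imp_le\<close>)
qed

lemma smooth_inv: "smooth_net (u::real\<Rightarrow>real) \<Longrightarrow> \<forall>t\<in>Iset. u t > 0 \<Longrightarrow> smooth_net (\<lambda>t. 1 / u t)"
proof -
  assume u: "smooth_net u" "\<forall>t\<in>Iset. u t > 0"
  have "smooth_net (\<lambda>t. u t powr (-1))" by (rule smooth_powr[OF u])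
  then show ?thesis by (rule smooth_cong) (use u in \<open>auto simp: powr_neg_one\<close>)
qed

lemma smooth_sq: "smooth_net (u :: real \<Rightarrow> real) \<Longrightarrow> smooth_net (\<lambda>t. (u t)^2)"
  using smooth_mult[of u u] by (simp add: power2_eq_square)

lemma smooth_of_real: "smooth_net (a::real \<Rightarrow> real) \<Longrightarrow> smooth_net (\<lambda>t. of_real (a t) :: 'a::real_normed_algebra_1)"
  by (rule smooth_lin[OF bounded_linear_of_real])

lemma moderate_by: "moderate_net (k::real \<Rightarrow> real) \<Longrightarrow> (\<And>e. e > 0 \<Longrightarrow> norm (g e) \<le> k e) \<Longrightarrow> moderate_net g"
proof -
  assume k: "moderate_net k" and g: "\<And>e. e > 0 \<Longrightarrow> norm (g e) \<le> k e"
  have "eventually (\<lambda>e. norm (g e) \<le> norm (k e)) (at_right 0)"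
    using eventually_at_right_less[of 0] by (rule eventually_mono) (auto intro: order_trans[OF g abs_ge_self])
  then show ?thesis by (rule moderate_le[OF k])
qed

lemma negligible_by: "negligible_net (k::real \<Rightarrow> real) \<Longrightarrow> (\<And>e. e > 0 \<Longrightarrow> norm (g e) \<le> k e) \<Longrightarrow> negligible_net g"
proof -
  assume k: "negligible_net k" and g: "\<And>e. e > 0 \<Longrightarrow> norm (g e) \<le> k e"
  have "eventually (\<lambda>e. norm (g e) \<le> norm (k e)) (at_right 0)"
    using eventually_at_right_less[of 0] by (rule eventually_mono) (auto intro: order_trans[OF g abs_ge_self])
  then show ?thesis by (rule negligible_le[OF k])
qed

lemma moderate_norm: "moderate_net f \<Longrightarrow> moderate_net (\<lambda>e. norm (f e))"
  by (rule moderate_le) auto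

lemma negligible_norm: "negligible_net f \<Longrightarrow> negligible_net (\<lambda>e. norm (f e))"
  by (rule negligible_le) auto

lemma moderate_smult: "moderate_net (f::real\<Rightarrow>real) \<Longrightarrow> moderate_net (\<lambda>e. c * f e)"
  using moderate_mult[OF moderate_const[of c]] by blast

lemma negligible_smult: "negligible_net (f::real\<Rightarrow>real) \<Longrightarrow> negligible_net (\<lambda>e. c * f e)"
  using negligible_mult'[OF moderate_const[of c]] by blast

context
  fixes cj :: "'a::real_normed_field \<Rightarrow> 'a" and re :: "'a \<Rightarrow> real"
  assumes cj: "bounded_linear cj" and re: "bounded_linear re" and re_of: "\<And>x. re (of_real x) = x"
    and cjmul: "\<And>x. x * cj x = of_real ((norm x)^2)" and cjn: "\<And>x. norm (cj x) = norm x"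
begin

lemma smooth_nsq: "smooth_net (R::real \<Rightarrow> 'a) \<Longrightarrow> smooth_net (\<lambda>e. (norm (R e))^2)"
proof -
  assume R: "smooth_net R"
  have "smooth_net (\<lambda>e. re (R e * cj (R e)))"
    by (intro smooth_lin[OF re] smooth_mult R smooth_lin[OF cj])
  then show ?thesis by (simp only: cjmul re_of)
qed

lemma absn_smooth: "smooth_net (R::real \<Rightarrow> 'a) \<Longrightarrow> smooth_net (absn R)"
proof -
  assume R: "smooth_net R"
  have "smooth_net (\<lambda>e. sqrt ((norm (R e))^2 + (gam e)^2))"
    by (intro smooth_sqrt smooth_add smooth_nsq R smooth_sq smooth_gam)
      (auto intro!: add_nonneg_pos gam_sq_pos)
  then show ?thesis by (simp add: absn_def[abs_def])
qed

lemma absn_moderate: "moderate_net (R::real \<Rightarrow> 'a) \<Longrightarrow> moderate_net (absn R)"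
proof -
  assume R: "moderate_net R"
  have "moderate_net (\<lambda>e. norm (R e) + gam e)" by (intro moderate_add moderate_norm R moderate_gam)
  then show ?thesis by (rule moderate_by) (use absn_bounds[where R=R] in \<open>auto simp: abs_of_pos\<close>)
qed

lemma EM_of_real: "smooth_net a \<Longrightarrow> moderate_net a \<Longrightarrow> (\<lambda>e. of_real (a e) :: 'a) \<in> EM_sm"
  by (intro EM_smI smooth_of_real) (auto elim!: moderate_le)

lemma absn_EM: "(R::real \<Rightarrow> 'a) \<in> EM_sm \<Longrightarrow> (\<lambda>e. of_real (absn R e) :: 'a) \<in> EM_sm"
  using EM_of_real absn_smooth absn_moderate EM_smD by blast

lemma gabs_eq:
  assumes r: "r0 \<in> (K_sm :: (real \<Rightarrow> 'a) set set)"
  shows "gabs r0 = cls_sm (\<lambda>e. of_real (absn (rep r0) e))"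
  unfolding gabs_def
proof (rule tau_inv)
  show "(\<lambda>e. of_real (absn (rep r0) e) :: 'a) \<in> EM_sm" using absn_EM K_sm_rep[OF r] by blast
  show "negligible_net (\<lambda>e. (of_real (absn (rep r0) e) :: 'a) - of_real (norm (rep r0 e)))"
    by (rule negligible_by[OF negligible_gam]) (use absn_diff[where R="rep r0"] in \<open>auto simp flip: of_real_diff\<close>)
qed

end


context
  fixes cj :: "'a::real_normed_field \<Rightarrow> 'a" and re :: "'a \<Rightarrow> real"
  assumes cj: "bounded_linear cj" and re: "bounded_linear re" and re_of: "\<And>x. re (of_real x) = x"
    and cjmul: "\<And>x. x * cj x = of_real ((norm x)^2)" and cjn: "\<And>x. norm (cj x) = norm x"
begin

lemma absn_EM': "(R::real \<Rightarrow> 'a) \<in> EM_sm \<Longrightarrow> smooth_net (absn R) \<and> moderate_net (absn R)"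
  using absn_smooth[OF cj re re_of cjmul cjn] absn_moderate[OF cj re re_of cjmul cjn] EM_smD by blast

lemma cj_R_div:
  fixes R :: "real \<Rightarrow> 'a"
  assumes R: "R \<in> EM_sm" and a: "smooth_net a" and apos: "\<And>e. a e > 0" and ab: "\<And>e. norm (R e) \<le> a e"
  shows "(\<lambda>e. cj (R e) * of_real (1 / a e)) \<in> EM_sm" "\<And>e. norm (cj (R e) * of_real (1 / a e)) \<le> 1"
proof -
  show b: "norm (cj (R e) * of_real (1 / a e)) \<le> 1" for e
    using ab[of e] apos[of e] by (simp add: norm_mult norm_divide cjn abs_of_pos divide_le_eq)
  show "(\<lambda>e. cj (R e) * of_real (1 / a e)) \<in> EM_sm"
  proof (rule EM_smI)
    show "smooth_net (\<lambda>e. cj (R e) * of_real (1 / a e))"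
      by (intro smooth_mult smooth_lin[OF cj] smooth_of_real smooth_inv a) (use R apos EM_smD in auto)
    show "moderate_net (\<lambda>e. cj (R e) * of_real (1 / a e))"
      by (rule moderate_by[OF moderate_const[of 1]]) (use b in auto)
  qed
qed

lemma R_div:
  fixes R :: "real \<Rightarrow> 'a"
  assumes R: "R \<in> EM_sm" and a: "smooth_net a" and apos: "\<And>e. a e > 0" and ab: "\<And>e. norm (R e) \<le> a e"
  shows "(\<lambda>e. R e * of_real (1 / a e)) \<in> EM_sm" "\<And>e. norm (R e * of_real (1 / a e)) \<le> 1"
proof -
  show b: "norm (R e * of_real (1 / a e)) \<le> 1" for e
    using ab[of e] apos[of e] by (simp add: norm_mult norm_divide abs_of_pos divide_le_eq)
  show "(\<lambda>e. R e * of_real (1 / a e)) \<in> EM_sm"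
  proof (rule EM_smI)
    show "smooth_net (\<lambda>e. R e * of_real (1 / a e))"
      by (intro smooth_mult smooth_of_real smooth_inv a) (use R apos EM_smD in auto)
    show "moderate_net (\<lambda>e. R e * of_real (1 / a e))"
      by (rule moderate_by[OF moderate_const[of 1]]) (use b in auto)
  qed
qed

lemma P1:
  fixes R S :: "real \<Rightarrow> 'a"
  assumes R: "R \<in> EM_sm" and S: "S \<in> EM_sm"
  shows "ideal_sum (principal (cls_sm R)) (principal (cls_sm S)) =
    principal (cls_sm (\<lambda>e. of_real (absn R e + absn S e)))"
proof -
  define A where "A = absn R"
  define B where "B = absn S"
  have A: "smooth_net A" "moderate_net A" using absn_EM'[OF R] by (auto simp: A_def)
  have B: "smooth_net B" "moderate_net B" using absn_EM'[OF S] by (auto simp: B_def)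
  note Ab = absn_bounds[where R=R, folded A_def]
  note Bb = absn_bounds[where R=S, folded B_def]
  have ABpos: "A e + B e > 0" for e using Ab(4)[of e] Bb(4)[of e] by simp
  have ABsm: "smooth_net (\<lambda>e. A e + B e)" by (intro smooth_add A B)
  have Sg: "(\<lambda>e. of_real (A e + B e) :: 'a) \<in> EM_sm"
    by (intro EM_of_real[OF cj re re_of cjmul cjn] smooth_add moderate_add A B)
  define u where "u e = R e * of_real (1 / (A e + B e))" for e
  define v where "v e = S e * of_real (1 / (A e + B e))" for e
  have RAB: "norm (R e) \<le> A e + B e" for e using Ab(1)[of e] Bb(4)[of e] by linarith
  have SAB: "norm (S e) \<le> A e + B e" for e using Bb(1)[of e] Ab(4)[of e] by linarith
  have u: "u \<in> EM_sm" unfolding u_def by (rule R_div(1)[OF R ABsm ABpos RAB])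
  have v: "v \<in> EM_sm" unfolding v_def by (rule R_div(1)[OF S ABsm ABpos SAB])
  have eq1: "R e * x e + S e * y e = of_real (A e + B e) * (u e * x e + v e * y e)" for e x y
  proof -
    have ne: "(of_real (A e + B e) :: 'a) * of_real (1 / (A e + B e)) = 1"
    proof -
      have h: "(A e + B e) * (1 / (A e + B e)) = 1" using ABpos[of e] by simp
      have "(of_real ((A e + B e) * (1 / (A e + B e))) :: 'a) = 1" by (simp only: h of_real_1)
      then show ?thesis by (simp only: of_real_mult)
    qed
    define w where "w = (of_real (1 / (A e + B e)) :: 'a)"
    define c where "c = (of_real (A e + B e) :: 'a)"
    have uv: "u e = R e * w" "v e = S e * w" unfolding u_def v_def w_def by (rule refl)+
    have "c * (R e * w * x e + S e * w * y e) = (c * w) * (R e * x e + S e * y e)" by (simp add: algebra_simps)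
    then have "of_real (A e + B e) * (u e * x e + v e * y e) =
      ((of_real (A e + B e) :: 'a) * of_real (1 / (A e + B e))) * (R e * x e + S e * y e)"
      unfolding uv c_def w_def .
    then show ?thesis using ne by simp
  qed
  have "ideal_sum (principal (cls_sm R)) (principal (cls_sm S)) =
    principal (cls_sm (\<lambda>e. of_real (A e + B e)))"
    unfolding ideal_sum_cls[OF R S] principal_cls[OF Sg]
  proof (intro equalityI subsetI)
    fix X :: "(real \<Rightarrow> 'a) set" assume "X \<in> {cls_sm (\<lambda>e. R e * x e + S e * y e) | x y. x \<in> EM_sm \<and> y \<in> EM_sm}"
    then obtain x y where xy: "x \<in> EM_sm" "y \<in> EM_sm" and X: "X = cls_sm (\<lambda>e. R e * x e + S e * y e)" by blast
    have "X = cls_sm (\<lambda>e. of_real (A e + B e) * (u e * x e + v e * y e))" unfolding X eq1 ..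
    moreover have "(\<lambda>e. u e * x e + v e * y e) \<in> EM_sm" by (intro EM_sm_add EM_sm_mult u v xy)
    ultimately show "X \<in> {cls_sm (\<lambda>e. of_real (A e + B e) * x e) | x. x \<in> EM_sm}"
      by (intro CollectI exI[of _ "\<lambda>e. u e * x e + v e * y e"]) simp
  next
    fix X :: "(real \<Rightarrow> 'a) set" assume "X \<in> {cls_sm (\<lambda>e. of_real (A e + B e) * x e) | x. x \<in> EM_sm}"
    then obtain z where z: "z \<in> EM_sm" and X: "X = cls_sm (\<lambda>e. of_real (A e + B e) * z e)" by blast
    define x where "x e = cj (R e) * of_real (1 / A e) * z e" for e
    define y where "y e = cj (S e) * of_real (1 / B e) * z e" for e
    have x: "x \<in> EM_sm" unfolding x_def
      by (intro EM_sm_mult z cj_R_div(1)[OF R A(1)]) (use Ab in auto)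
    have y: "y \<in> EM_sm" unfolding y_def
      by (intro EM_sm_mult z cj_R_div(1)[OF S B(1)]) (use Bb in auto)
    define c where "c e = (gam e)^2 / A e + (gam e)^2 / B e" for e
    have cn: "negligible_net (\<lambda>e. (of_real (c e) :: 'a))"
    proof (rule negligible_by)
      show "negligible_net (\<lambda>e. 2 * gam e)" by (intro negligible_smult negligible_gam)
      fix e :: real
      have h1: "(gam e)^2 / A e \<le> gam e" using Ab(2)[of e] Ab(4)[of e] gam_pos[of e]
        by (simp add: divide_le_eq power2_eq_square mult_left_mono)
      have h2: "(gam e)^2 / B e \<le> gam e" using Bb(2)[of e] Bb(4)[of e] gam_pos[of e]
        by (simp add: divide_le_eq power2_eq_square mult_left_mono)
      have c0: "0 \<le> c e" using Ab(4)[of e] Bb(4)[of e] by (simp add: c_def)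
      have n: "norm (of_real (c e) :: 'a) = c e" using c0 by (simp only: norm_of_real abs_of_nonneg)
      show "norm (of_real (c e) :: 'a) \<le> 2 * gam e" using h1 h2 n unfolding c_def by linarith
    qed
    have key: "of_real (A e + B e) * z e - (R e * x e + S e * y e) = of_real (c e) * z e" for e
    proof -
      have rx: "R e * x e = of_real ((norm (R e))^2 / A e) * z e"
      proof -
        have "R e * x e = (R e * cj (R e)) * of_real (1 / A e) * z e" by (simp add: x_def mult_ac)
        then show ?thesis by (simp add: cjmul flip: of_real_mult)
      qed
      have sy: "S e * y e = of_real ((norm (S e))^2 / B e) * z e"
      proof -
        have "S e * y e = (S e * cj (S e)) * of_real (1 / B e) * z e" by (simp add: y_def mult_ac)
        then show ?thesis by (simp add: cjmul flip: of_real_mult)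
      qed
      have q1: "(norm (R e))^2 = (A e)^2 - (gam e)^2" using Ab(5)[of e] by linarith
      have q2: "(norm (S e))^2 = (B e)^2 - (gam e)^2" using Bb(5)[of e] by linarith
      have r1: "(norm (R e))^2 / A e = A e - (gam e)^2 / A e"
        unfolding q1 using Ab(4)[of e] by (simp add: diff_divide_distrib power2_eq_square)
      have r2: "(norm (S e))^2 / B e = B e - (gam e)^2 / B e"
        unfolding q2 using Bb(4)[of e] by (simp add: diff_divide_distrib power2_eq_square)
      have cc: "A e + B e - ((norm (R e))^2 / A e + (norm (S e))^2 / B e) = c e"
        unfolding r1 r2 c_def by simp
      have h: "of_real (A e + B e) - (of_real ((norm (R e))^2 / A e) + of_real ((norm (S e))^2 / B e)) = (of_real (c e) :: 'a)"
        by (simp only: of_real_add[symmetric] of_real_diff[symmetric] cc)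
      show ?thesis unfolding rx sy by (simp only: h[symmetric] left_diff_distrib distrib_right)
    qed
    have "negligible_net (\<lambda>e. of_real (A e + B e) * z e - (R e * x e + S e * y e))"
      unfolding key by (rule negligible_mult[OF cn]) (use z EM_smD in auto)
    then have "X = cls_sm (\<lambda>e. R e * x e + S e * y e)" unfolding X by (rule cls_eq)
    then show "X \<in> {cls_sm (\<lambda>e. R e * x e + S e * y e) | x y. x \<in> EM_sm \<and> y \<in> EM_sm}" using x y by (intro CollectI exI[of _ x] exI[of _ y]) simp
  qed
  then show ?thesis by (simp only: A_def B_def)
qed

end


lemma EM_of_real': "smooth_net a \<Longrightarrow> moderate_net a \<Longrightarrow> (\<lambda>e. of_real (a e) :: 'a::real_normed_field) \<in> EM_sm"
  by (intro EM_smI smooth_of_real) (auto elim!: moderate_le)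

lemma max_lip: "\<bar>max (a::real) b - max c d\<bar> \<le> \<bar>a - c\<bar> + \<bar>b - d\<bar>"
  by (auto simp: max_def abs_if split: if_splits)

lemma min_lip: "\<bar>min (a::real) b - min c d\<bar> \<le> \<bar>a - c\<bar> + \<bar>b - d\<bar>"
  by (auto simp: min_def abs_if split: if_splits)

lemma of_real_zero_diff:
  fixes x y z :: "real \<Rightarrow> real"
  assumes "\<And>e. x e = y e * z e"
  shows "negligible_net (\<lambda>e::real. (of_real (x e) :: 'a::real_normed_field) - of_real (y e) * of_real (z e))"
  by (rule negligible_le[OF negligible_zero]) (auto simp: assms simp flip: of_real_mult)

context
  fixes A B :: "real \<Rightarrow> real"
  assumes A: "smooth_net A" "moderate_net A" and B: "smooth_net B" "moderate_net B"
    and gA: "\<And>e. gam e \<le> A e" and gB: "\<And>e. gam e \<le> B e"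
begin

lemma Apos: "A e > 0" using gA[of e] gam_pos[of e] by linarith
lemma Bpos: "B e > 0" using gB[of e] gam_pos[of e] by linarith

lemma sq_smooth: "smooth_net (\<lambda>e. sqrt ((A e - B e)^2 + (gam e)^2))"
  by (intro smooth_sqrt smooth_add smooth_sq smooth_diff A B smooth_gam) (auto intro!: add_nonneg_pos gam_sq_pos)

lemma Mx_smooth: "smooth_net (Mx A B)"
proof -
  have "smooth_net (\<lambda>e. (1/2) * (A e + B e + sqrt ((A e - B e)^2 + (gam e)^2)))"
    by (intro smooth_mult smooth_const smooth_add A B sq_smooth)
  then show ?thesis by (rule smooth_cong) (auto simp: Mx_def)
qed

lemma Mn_smooth: "smooth_net (Mn A B)"
proof -
  have "smooth_net (\<lambda>e. (1/2) * (A e + B e - sqrt ((A e - B e)^2 + (gam e)^2)))"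
    by (intro smooth_mult smooth_const smooth_add smooth_diff A B sq_smooth)
  then show ?thesis by (rule smooth_cong) (auto simp: Mn_def)
qed

lemma Mxb: "max (A e) (B e) \<le> Mx A B e" "Mx A B e \<le> max (A e) (B e) + gam e / 2"
  using Mx_bounds[OF gA gB] .

lemma Mnb: "min (A e) (B e) - gam e / 2 \<le> Mn A B e" "Mn A B e \<le> min (A e) (B e)" "gam e / 2 \<le> Mn A B e"
  using Mn_bounds[OF gA gB] .

lemma Mx_pos: "Mx A B e > 0" using Mxb(1)[of e] Apos[of e] by linarith
lemma Mn_pos: "Mn A B e > 0" using Mnb(3)[of e] gam_pos[of e] by linarith

lemma Mx_moderate: "moderate_net (Mx A B)"
proof -
  have "moderate_net (\<lambda>e. A e + B e + gam e)" by (intro moderate_add A B moderate_gam)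
  then show ?thesis
  proof (rule moderate_by)
    fix e :: real
    show "norm (Mx A B e) \<le> A e + B e + gam e"
      using Mxb[of e] Mx_pos[of e] Apos[of e] Bpos[of e] gA[of e] by (auto simp: max_def split: if_splits)
  qed
qed

lemma Mn_moderate: "moderate_net (Mn A B)"
proof -
  have "moderate_net (\<lambda>e. A e)" by (rule A)
  then show ?thesis
  proof (rule moderate_by)
    fix e :: real
    show "norm (Mn A B e) \<le> A e"
      using Mnb[of e] Mn_pos[of e] by (auto simp: min_def split: if_splits)
  qed
qed

lemma P2:
  "principal (cls_sm (\<lambda>e. of_real (A e + B e) :: 'a::real_normed_field)) = principal (cls_sm (\<lambda>e. of_real (Mx A B e)))"
proof -
  have ABsm: "smooth_net (\<lambda>e. A e + B e)" by (intro smooth_add A B)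
  have ABm: "moderate_net (\<lambda>e. A e + B e)" by (intro moderate_add A B)
  have ABpos: "A e + B e > 0" for e using Apos[of e] Bpos[of e] by simp
  have S: "(\<lambda>e. of_real (A e + B e) :: 'a) \<in> EM_sm" by (rule EM_of_real'[OF ABsm ABm])
  have M: "(\<lambda>e. of_real (Mx A B e) :: 'a) \<in> EM_sm" by (rule EM_of_real'[OF Mx_smooth Mx_moderate])
  have u1: "(\<lambda>e. of_real ((A e + B e) * (1 / Mx A B e)) :: 'a) \<in> EM_sm"
  proof (rule EM_of_real')
    show "smooth_net (\<lambda>e. (A e + B e) * (1 / Mx A B e))"
      by (intro smooth_mult ABsm smooth_inv Mx_smooth) (auto intro: Mx_pos)
    show "moderate_net (\<lambda>e. (A e + B e) * (1 / Mx A B e))"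
    proof (rule moderate_by[OF moderate_const[of 2]])
      fix e :: real
      have "A e + B e \<le> 2 * Mx A B e" using Mxb(1)[of e] by (auto simp: max_def split: if_splits)
      then show "norm ((A e + B e) * (1 / Mx A B e)) \<le> 2"
        using Mx_pos[of e] ABpos[of e] by (simp add: divide_le_eq)
    qed
  qed
  have u2: "(\<lambda>e. of_real (Mx A B e * (1 / (A e + B e))) :: 'a) \<in> EM_sm"
  proof (rule EM_of_real')
    show "smooth_net (\<lambda>e. Mx A B e * (1 / (A e + B e)))"
      by (intro smooth_mult Mx_smooth smooth_inv ABsm) (auto intro: ABpos)
    show "moderate_net (\<lambda>e. Mx A B e * (1 / (A e + B e)))"
    proof (rule moderate_by[OF moderate_const[of 2]])
      fix e :: real
      have "Mx A B e \<le> 2 * (A e + B e)" using Mxb(2)[of e] gA[of e] Apos[of e] Bpos[of e] by (auto simp: max_def split: if_splits)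
      then show "norm (Mx A B e * (1 / (A e + B e))) \<le> 2"
        using Mx_pos[of e] ABpos[of e] by (simp add: divide_le_eq)
    qed
  qed
  show ?thesis
  proof
    show "principal (cls_sm (\<lambda>e. of_real (A e + B e) :: 'a)) \<subseteq> principal (cls_sm (\<lambda>e. of_real (Mx A B e)))"
      by (rule prin_sub[OF S M u1], rule of_real_zero_diff) (use Mx_pos in \<open>auto simp: less_imp_neq[symmetric]\<close>)
    show "principal (cls_sm (\<lambda>e. of_real (Mx A B e) :: 'a)) \<subseteq> principal (cls_sm (\<lambda>e. of_real (A e + B e)))"
      by (rule prin_sub[OF M S u2], rule of_real_zero_diff) (use ABpos in \<open>auto simp: less_imp_neq[symmetric]\<close>)
  qed
qed

lemma P4:
  "gsup (cls_sm (\<lambda>e. of_real (A e) :: 'a::real_normed_field)) (cls_sm (\<lambda>e. of_real (B e))) = cls_sm (\<lambda>e. of_real (Mx A B e))"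
proof -
  have EA: "(\<lambda>e. of_real (A e) :: 'a) \<in> EM_sm" by (rule EM_of_real'[OF A])
  have EB: "(\<lambda>e. of_real (B e) :: 'a) \<in> EM_sm" by (rule EM_of_real'[OF B])
  define f1 where "f1 = rrep (cls_sm (\<lambda>e. of_real (A e) :: 'a))"
  define f2 where "f2 = rrep (cls_sm (\<lambda>e. of_real (B e) :: 'a))"
  have n1: "negligible_net (\<lambda>e. f1 e - A e)" unfolding f1_def by (rule rrep_cls[OF EA])
  have n2: "negligible_net (\<lambda>e. f2 e - B e)" unfolding f2_def by (rule rrep_cls[OF EB])
  have "tau_sm_inv (cls_co (\<lambda>e. of_real (max (f1 e) (f2 e)) :: 'a)) = cls_sm (\<lambda>e. of_real (Mx A B e))"
  proof (rule tau_inv)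
    show "(\<lambda>e. of_real (Mx A B e) :: 'a) \<in> EM_sm" by (rule EM_of_real'[OF Mx_smooth Mx_moderate])
    have "negligible_net (\<lambda>e. gam e + norm (f1 e - A e) + norm (f2 e - B e))"
      by (intro negligible_add negligible_gam negligible_norm n1 n2)
    then show "negligible_net (\<lambda>e. (of_real (Mx A B e) :: 'a) - of_real (max (f1 e) (f2 e)))"
    proof (rule negligible_by)
      fix e :: real
      have "\<bar>max (A e) (B e) - max (f1 e) (f2 e)\<bar> \<le> \<bar>A e - f1 e\<bar> + \<bar>B e - f2 e\<bar>" by (rule max_lip)
      then have "\<bar>Mx A B e - max (f1 e) (f2 e)\<bar> \<le> gam e + norm (f1 e - A e) + norm (f2 e - B e)"
        using Mxb[of e] gam_pos[of e] by (simp add: abs_minus_commute) linarith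
      then show "norm ((of_real (Mx A B e) :: 'a) - of_real (max (f1 e) (f2 e))) \<le> gam e + norm (f1 e - A e) + norm (f2 e - B e)"
        by (simp only: of_real_diff[symmetric] norm_of_real)
    qed
  qed
  then show ?thesis by (simp add: gsup_def f1_def f2_def)
qed

lemma P5:
  "ginf (cls_sm (\<lambda>e. of_real (A e) :: 'a::real_normed_field)) (cls_sm (\<lambda>e. of_real (B e))) = cls_sm (\<lambda>e. of_real (Mn A B e))"
proof -
  have EA: "(\<lambda>e. of_real (A e) :: 'a) \<in> EM_sm" by (rule EM_of_real'[OF A])
  have EB: "(\<lambda>e. of_real (B e) :: 'a) \<in> EM_sm" by (rule EM_of_real'[OF B])
  define f1 where "f1 = rrep (cls_sm (\<lambda>e. of_real (A e) :: 'a))"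
  define f2 where "f2 = rrep (cls_sm (\<lambda>e. of_real (B e) :: 'a))"
  have n1: "negligible_net (\<lambda>e. f1 e - A e)" unfolding f1_def by (rule rrep_cls[OF EA])
  have n2: "negligible_net (\<lambda>e. f2 e - B e)" unfolding f2_def by (rule rrep_cls[OF EB])
  have "tau_sm_inv (cls_co (\<lambda>e. of_real (min (f1 e) (f2 e)) :: 'a)) = cls_sm (\<lambda>e. of_real (Mn A B e))"
  proof (rule tau_inv)
    show "(\<lambda>e. of_real (Mn A B e) :: 'a) \<in> EM_sm" by (rule EM_of_real'[OF Mn_smooth Mn_moderate])
    have "negligible_net (\<lambda>e. gam e + norm (f1 e - A e) + norm (f2 e - B e))"
      by (intro negligible_add negligible_gam negligible_norm n1 n2)
    then show "negligible_net (\<lambda>e. (of_real (Mn A B e) :: 'a) - of_real (min (f1 e) (f2 e)))"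
    proof (rule negligible_by)
      fix e :: real
      have "\<bar>min (A e) (B e) - min (f1 e) (f2 e)\<bar> \<le> \<bar>A e - f1 e\<bar> + \<bar>B e - f2 e\<bar>" by (rule min_lip)
      then have "\<bar>Mn A B e - min (f1 e) (f2 e)\<bar> \<le> gam e + norm (f1 e - A e) + norm (f2 e - B e)"
        using Mnb[of e] gam_pos[of e] by (simp add: abs_minus_commute) linarith
      then show "norm ((of_real (Mn A B e) :: 'a) - of_real (min (f1 e) (f2 e))) \<le> gam e + norm (f1 e - A e) + norm (f2 e - B e)"
        by (simp only: of_real_diff[symmetric] norm_of_real)
    qed
  qed
  then show ?thesis by (simp add: ginf_def f1_def f2_def)
qed

end


lemma aux_div: "(d::real) \<noteq> 0 \<Longrightarrow> 1 - a * (a * (1 / d)) = (d - a^2) / d"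
  by (simp add: field_simps power2_eq_square)

lemma aux_ring: "(a::'a::comm_ring_1) - c * (a * d) = a * (1 - c * d)"
  by (simp add: algebra_simps)

context
  fixes cj :: "'a::real_normed_field \<Rightarrow> 'a" and re :: "'a \<Rightarrow> real"
  assumes cj: "bounded_linear cj" and re: "bounded_linear re" and re_of: "\<And>x. re (of_real x) = x"
    and cjmul: "\<And>x. x * cj x = of_real ((norm x)^2)" and cjn: "\<And>x. norm (cj x) = norm x"
begin

lemma moderate_EM: "f \<in> EM_sm \<Longrightarrow> moderate_net f" and smooth_EM: "f \<in> EM_sm \<Longrightarrow> smooth_net f"
  by (auto simp: EM_sm_def)

lemma Mn_sub:
  fixes R :: "real \<Rightarrow> 'a"
  assumes R: "R \<in> EM_sm" and m: "smooth_net m" "moderate_net m" and mpos: "\<And>e. m e > 0"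
    and mA: "\<And>e. m e \<le> absn R e"
  shows "principal (cls_sm (\<lambda>e. of_real (m e) :: 'a)) \<subseteq> principal (cls_sm R)"
proof -
  define A where "A = absn R"
  have A: "smooth_net A" "moderate_net A" using absn_EM'[OF cj re re_of cjmul cjn R] by (auto simp: A_def)
  note Ab = absn_bounds[where R=R, folded A_def]
  have Mg: "(\<lambda>e. of_real (m e) :: 'a) \<in> EM_sm" by (rule EM_of_real'[OF m])
  define u where "u e = cj (R e) * of_real (m e * (1 / (A e * A e)))" for e
  have ub: "norm (u e) \<le> 1" for e
  proof -
    have "norm (R e) * m e \<le> A e * A e"
      using Ab(1)[of e] mA[of e] mpos[of e] by (intro mult_mono) (auto simp: A_def)
    then show ?thesis using Ab(4)[of e] mpos[of e]
      by (simp add: u_def norm_mult norm_divide cjn divide_le_eq abs_of_pos)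
  qed
  have u: "u \<in> EM_sm"
  proof (rule EM_smI)
    show "smooth_net u" unfolding u_def
      by (intro smooth_mult smooth_lin[OF cj] smooth_of_real m smooth_inv A smooth_EM[OF R])
        (use Ab(4) in auto)
    show "moderate_net u" by (rule moderate_by[OF moderate_const[of 1]]) (use ub in auto)
  qed
  have "negligible_net (\<lambda>e. (of_real (m e) :: 'a) - R e * u e)"
  proof (rule negligible_by[OF negligible_gam])
    fix e :: real assume "e > 0"
    have q1: "(norm (R e))^2 = (A e)^2 - (gam e)^2" using Ab(5)[of e] by linarith
    have Ru: "R e * u e = of_real ((norm (R e))^2 * (m e * (1 / (A e * A e))))"
      unfolding u_def by (simp only: mult.assoc[symmetric] cjmul of_real_mult)
    have eq: "m e - (norm (R e))^2 * (m e * (1 / (A e * A e))) = m e * (gam e)^2 / (A e * A e)"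
      unfolding q1 using Ab(4)[of e] by (simp add: field_simps power2_eq_square)
    have "m e * (gam e)^2 / (A e * A e) \<le> A e * (gam e)^2 / (A e * A e)"
      using mA[of e] Ab(4)[of e] by (intro divide_right_mono mult_right_mono) (auto simp: A_def)
    also have "\<dots> = (gam e)^2 / A e" using Ab(4)[of e] by (simp add: power2_eq_square)
    also have "\<dots> \<le> gam e" using Ab(2)[of e] Ab(4)[of e] gam_pos[of e]
      by (simp add: divide_le_eq power2_eq_square mult_left_mono)
    finally have le: "m e * (gam e)^2 / (A e * A e) \<le> gam e" .
    have ge: "0 \<le> m e * (gam e)^2 / (A e * A e)" using mpos[of e] by simp
    have "norm ((of_real (m e) :: 'a) - R e * u e) = \<bar>m e * (gam e)^2 / (A e * A e)\<bar>"
      unfolding Ru eq[symmetric] by (simp only: of_real_diff[symmetric] norm_of_real)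
    then show "norm ((of_real (m e) :: 'a) - R e * u e) \<le> gam e" using le ge by simp
  qed
  then show ?thesis by (rule prin_sub[OF Mg R u])
qed

lemma P3:
  fixes R S :: "real \<Rightarrow> 'a"
  assumes R: "R \<in> EM_sm" and S: "S \<in> EM_sm"
  shows "principal (cls_sm R) \<inter> principal (cls_sm S) =
    principal (cls_sm (\<lambda>e. of_real (Mn (absn R) (absn S) e)))"
proof -
  define A where "A = absn R"
  define B where "B = absn S"
  have A: "smooth_net A" "moderate_net A" using absn_EM'[OF cj re re_of cjmul cjn R] by (auto simp: A_def)
  have B: "smooth_net B" "moderate_net B" using absn_EM'[OF cj re re_of cjmul cjn S] by (auto simp: B_def)
  note Ab = absn_bounds[where R=R, folded A_def]
  note Bb = absn_bounds[where R=S, folded B_def]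
  define m where "m = Mn A B"
  note mctx = A(1) A(2) B(1) B(2) Ab(2) Bb(2)
  have ms: "smooth_net m" and mm: "moderate_net m" and mpos: "\<And>e. m e > 0"
    using Mn_smooth[OF mctx] Mn_moderate[OF mctx] Mn_pos[OF mctx] by (auto simp: m_def)
  note mb = Mnb[OF mctx, folded m_def]
  have Mg: "(\<lambda>e. of_real (m e) :: 'a) \<in> EM_sm" by (rule EM_of_real'[OF ms mm])
  have mA: "m e \<le> A e" for e using mb(2)[of e] by simp
  have mB: "m e \<le> B e" for e using mb(2)[of e] by simp
  have "principal (cls_sm R) \<inter> principal (cls_sm S) = principal (cls_sm (\<lambda>e. of_real (m e)))"
  proof (intro equalityI)
    show "principal (cls_sm (\<lambda>e. of_real (m e))) \<subseteq> principal (cls_sm R) \<inter> principal (cls_sm S)"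
    proof (intro Int_greatest)
      show "principal (cls_sm (\<lambda>e. of_real (m e))) \<subseteq> principal (cls_sm R)"
        by (rule Mn_sub[OF R ms mm mpos]) (use mA in \<open>simp add: A_def\<close>)
      show "principal (cls_sm (\<lambda>e. of_real (m e))) \<subseteq> principal (cls_sm S)"
        by (rule Mn_sub[OF S ms mm mpos]) (use mB in \<open>simp add: B_def\<close>)
    qed
  next
    show "principal (cls_sm R) \<inter> principal (cls_sm S) \<subseteq> principal (cls_sm (\<lambda>e. of_real (m e)))"
    proof
      fix X :: "(real \<Rightarrow> 'a) set"
      assume X: "X \<in> principal (cls_sm R) \<inter> principal (cls_sm S)"
      obtain x1 where x1: "x1 \<in> EM_sm" and X1: "X = cls_sm (\<lambda>e. R e * x1 e)"
        using X principal_cls[OF R] by auto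
      obtain x2 where x2: "x2 \<in> EM_sm" and X2: "X = cls_sm (\<lambda>e. S e * x2 e)"
        using X principal_cls[OF S] by auto
      define n where "n e = S e * x2 e - R e * x1 e" for e
      have nn: "negligible_net n" unfolding n_def
        by (rule cls_eqD) (use X1 X2 EM_sm_mult[OF S x2] in auto)
      have nE: "n \<in> EM_sm"
      proof (rule EM_smI)
        show "smooth_net n" unfolding n_def
          by (intro smooth_diff smooth_mult smooth_EM R S x1 x2)
        show "moderate_net n" by (rule negligible_moderate[OF nn])
      qed
      define q where "q = absn n"
      have q: "smooth_net q" "moderate_net q" using absn_EM'[OF cj re re_of cjmul cjn nE] by (auto simp: q_def)
      note qb = absn_bounds[where R=n, folded q_def]
      define K where "K e = norm (x1 e) + norm (x2 e)" for e
      have Km: "moderate_net K" unfolding K_def by (intro moderate_add moderate_norm moderate_EM x1 x2)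
      define Y where "Y e = norm (R e * x1 e)" for e
      have Yb: "Y e \<le> (m e + gam e) * K e + norm (n e)" for e
      proof -
        have K0: "0 \<le> K e" by (simp add: K_def)
        have y1: "Y e \<le> A e * K e"
        proof -
          have "Y e \<le> norm (R e) * norm (x1 e)" unfolding Y_def by (rule norm_mult_ineq)
          also have "\<dots> \<le> A e * K e" using Ab(1)[of e] Ab(4)[of e] by (intro mult_mono) (auto simp: K_def)
          finally show ?thesis .
        qed
        have y2: "Y e \<le> B e * K e + norm (n e)"
        proof -
          have "R e * x1 e = S e * x2 e - n e" by (simp add: n_def)
          then have "Y e \<le> norm (S e * x2 e) + norm (n e)" unfolding Y_def by (simp add: norm_triangle_ineq4)
          also have "norm (S e * x2 e) \<le> B e * K e"
          proof -
            have "norm (S e * x2 e) \<le> norm (S e) * norm (x2 e)" by (rule norm_mult_ineq)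
            also have "\<dots> \<le> B e * K e" using Bb(1)[of e] Bb(4)[of e] by (intro mult_mono) (auto simp: K_def)
            finally show ?thesis .
          qed
          finally show ?thesis by simp
        qed
        have "min (A e) (B e) * K e \<le> (m e + gam e) * K e"
          using mb(1)[of e] gam_pos[of e] K0 by (intro mult_right_mono) auto
        moreover have "Y e \<le> min (A e) (B e) * K e + norm (n e)"
        proof (cases "A e \<le> B e")
          case True
          then have mi: "min (A e) (B e) = A e" by simp
          show ?thesis unfolding mi by (rule add_increasing2[OF norm_ge_zero y1])
        next
          case False
          then have mi: "min (A e) (B e) = B e" by simp
          show ?thesis unfolding mi by (rule y2)
        qed
        ultimately show ?thesis by linarith
      qed
      define w where "w e = m e * (1 / ((m e)^2 + (q e)^2))" for e
      have den: "(m e)^2 + (q e)^2 > 0" for e using qb(4)[of e] by (simp add: add_nonneg_pos)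
      define z where "z e = R e * x1 e * of_real (w e)" for e
      have zE: "z \<in> EM_sm"
      proof (rule EM_smI)
        show "smooth_net z" unfolding z_def w_def
          by (intro smooth_mult smooth_EM R x1 smooth_of_real ms smooth_inv smooth_add smooth_sq q(1))
            (use den in auto)
        have "moderate_net (\<lambda>e. 2 * K e + 1)" by (intro moderate_add moderate_smult Km moderate_const)
        then show "moderate_net z"
        proof (rule moderate_by)
          fix e :: real
          have "Y e * m e / ((m e)^2 + (q e)^2) \<le> 2 * K e + 1"
            by (rule key2(2)[OF mpos qb(4) _ norm_ge_zero _ qb(2) qb(1)]) (use Yb[of e] gam_pos[of e] in \<open>auto simp: K_def Y_def\<close>)
          moreover have "norm (z e) = Y e * m e / ((m e)^2 + (q e)^2)"
          proof -
            have w0: "0 \<le> w e" using mpos[of e] den[of e] by (simp add: w_def)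
            have "norm (z e) = Y e * \<bar>w e\<bar>" unfolding z_def Y_def by (simp only: norm_mult norm_of_real)
            then show ?thesis using w0 mpos[of e] by (simp add: w_def)
          qed
          ultimately show "norm (z e) \<le> 2 * K e + 1" by simp
        qed
      qed
      have negl: "negligible_net (\<lambda>e. R e * x1 e - of_real (m e) * z e)"
      proof -
        have nn': "negligible_net (\<lambda>e. norm (n e))" by (rule negligible_norm[OF nn])
        have "negligible_net (\<lambda>e. K e * (norm (n e) + gam e) + gam e * K e + norm (n e))"
          by (intro negligible_add negligible_mult' negligible_mult Km nn' negligible_gam)
        then show ?thesis
        proof (rule negligible_by)
          fix e :: real
          have K0: "0 \<le> K e" by (simp add: K_def)
          have eq: "R e * x1 e - of_real (m e) * z e = R e * x1 e * of_real ((q e)^2 / ((m e)^2 + (q e)^2))"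
          proof -
            have dn: "(m e)^2 + (q e)^2 \<noteq> 0" using den[of e] by linarith
            have "1 - m e * w e = ((m e)^2 + (q e)^2 - (m e)^2) / ((m e)^2 + (q e)^2)"
              unfolding w_def by (rule aux_div[OF dn])
            then have "1 - m e * w e = (q e)^2 / ((m e)^2 + (q e)^2)" by simp
            then have h0: "(of_real (1 - m e * w e) :: 'a) = of_real ((q e)^2 / ((m e)^2 + (q e)^2))"
              by (rule arg_cong)
            then have h: "(1::'a) - of_real (m e) * of_real (w e) = of_real ((q e)^2 / ((m e)^2 + (q e)^2))"
              by (simp only: of_real_diff of_real_mult of_real_1)
            show ?thesis unfolding z_def h[symmetric] by (rule aux_ring)
          qed
          have "Y e * (q e)^2 / ((m e)^2 + (q e)^2) \<le> K e * q e + gam e * K e + norm (n e)"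
            by (rule key2(1)[OF mpos qb(4) _ norm_ge_zero _ qb(2) qb(1)]) (use Yb[of e] gam_pos[of e] in \<open>auto simp: K_def Y_def\<close>)
          also have "K e * q e \<le> K e * (norm (n e) + gam e)" using qb(3)[of e] K0 by (intro mult_left_mono) auto
          finally have le: "Y e * (q e)^2 / ((m e)^2 + (q e)^2) \<le> K e * (norm (n e) + gam e) + gam e * K e + norm (n e)"
            by simp
          have "norm (R e * x1 e - of_real (m e) * z e) = Y e * (q e)^2 / ((m e)^2 + (q e)^2)"
          proof -
            have "norm (R e * x1 e - of_real (m e) * z e) = Y e * \<bar>(q e)^2 / ((m e)^2 + (q e)^2)\<bar>"
              unfolding eq Y_def by (simp only: norm_mult norm_of_real)
            then show ?thesis using den[of e] by simp
          qed
          then show "norm (R e * x1 e - of_real (m e) * z e) \<le> K e * (norm (n e) + gam e) + gam e * K e + norm (n e)"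
            using le by simp
        qed
      qed
      have "X = cls_sm (\<lambda>e. of_real (m e) * z e)" unfolding X1 by (rule cls_eq[OF negl])
      then show "X \<in> principal (cls_sm (\<lambda>e. of_real (m e)))"
        unfolding principal_cls[OF Mg] using zE by (intro CollectI exI[of _ z]) simp
    qed
  qed
  then show ?thesis by (simp only: m_def A_def B_def)
qed

end


context
  fixes cj :: "'a::real_normed_field \<Rightarrow> 'a" and re :: "'a \<Rightarrow> real"
  assumes cj: "bounded_linear cj" and re: "bounded_linear re" and re_of: "\<And>x. re (of_real x) = x"
    and cjmul: "\<And>x. x * cj x = of_real ((norm x)^2)" and cjn: "\<And>x. norm (cj x) = norm x"
begin

lemma main_gen:
  assumes r0: "r0 \<in> (K_sm :: (real \<Rightarrow> 'a) set set)" and s0: "s0 \<in> K_sm"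
  shows "ideal_sum (principal r0) (principal s0) = principal (gadd (gabs r0) (gabs s0))
          \<and> principal (gadd (gabs r0) (gabs s0)) = principal (gsup (gabs r0) (gabs s0))
          \<and> principal r0 \<inter> principal s0 = principal (ginf (gabs r0) (gabs s0))"
proof -
  define R where "R = rep r0"
  define S where "S = rep s0"
  have R: "R \<in> EM_sm" and r0R: "r0 = cls_sm R" using K_sm_rep[OF r0] by (auto simp: R_def)
  have S: "S \<in> EM_sm" and s0S: "s0 = cls_sm S" using K_sm_rep[OF s0] by (auto simp: S_def)
  define A where "A = absn R"
  define B where "B = absn S"
  have A: "smooth_net A" "moderate_net A" using absn_EM'[OF cj re re_of cjmul cjn R] by (auto simp: A_def)
  have B: "smooth_net B" "moderate_net B" using absn_EM'[OF cj re re_of cjmul cjn S] by (auto simp: B_def)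
  have gA: "\<And>e. gam e \<le> A e" using absn_bounds(2) by (simp add: A_def)
  have gB: "\<And>e. gam e \<le> B e" using absn_bounds(2) by (simp add: B_def)
  note ctx = A(1) A(2) B(1) B(2) gA gB
  have ga: "gabs r0 = cls_sm (\<lambda>e. of_real (A e))"
    using gabs_eq[OF cj re re_of cjmul cjn r0] by (simp add: A_def R_def)
  have gb: "gabs s0 = cls_sm (\<lambda>e. of_real (B e))"
    using gabs_eq[OF cj re re_of cjmul cjn s0] by (simp add: B_def S_def)
  have EA: "(\<lambda>e. of_real (A e) :: 'a) \<in> EM_sm" by (rule EM_of_real'[OF A])
  have EB: "(\<lambda>e. of_real (B e) :: 'a) \<in> EM_sm" by (rule EM_of_real'[OF B])
  have gadd_eq: "gadd (gabs r0) (gabs s0) = cls_sm (\<lambda>e. of_real (A e + B e))"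
    unfolding ga gb gadd_cls[OF EA EB] by simp
  have 1: "ideal_sum (principal r0) (principal s0) = principal (gadd (gabs r0) (gabs s0))"
    unfolding gadd_eq unfolding r0R s0S A_def B_def by (rule P1[OF cj re re_of cjmul cjn R S])
  have 2: "principal (gadd (gabs r0) (gabs s0)) = principal (gsup (gabs r0) (gabs s0))"
    unfolding gadd_eq unfolding ga gb P4[OF ctx] by (rule P2[OF ctx])
  have 3: "principal r0 \<inter> principal s0 = principal (ginf (gabs r0) (gabs s0))"
    unfolding ga gb P5[OF ctx] unfolding r0R s0S A_def B_def by (rule P3[OF cj re re_of cjmul cjn R S])
  show ?thesis using 1 2 3 by blast
qed

end

lemma real_inst: "bounded_linear (\<lambda>x::real. x)" "\<And>x::real. (\<lambda>x. x) (of_real x) = x"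
  "\<And>x::real. x * (\<lambda>x. x) x = of_real ((norm x)^2)" "\<And>x::real. norm ((\<lambda>x. x) x) = norm x"
  by (auto simp: bounded_linear_ident power2_eq_square)

lemma complex_inst: "bounded_linear cnj" "bounded_linear Re" "\<And>x. Re (of_real x) = x"
  "\<And>x::complex. x * cnj x = of_real ((norm x)^2)" "\<And>x::complex. norm (cnj x) = norm x"
  by (auto simp: bounded_linear_cnj bounded_linear_Re complex_norm_square[symmetric] simp del: of_real_power)

theorem proposition4p26:
  shows "(\<forall>r \<in> (K_sm :: (real \<Rightarrow> real) set set). \<forall>s \<in> K_sm.
            ideal_sum (principal r) (principal s) = principal (gadd (gabs r) (gabs s))
          \<and> principal (gadd (gabs r) (gabs s)) = principal (gsup (gabs r) (gabs s))
          \<and> principal r \<inter> principal s = principal (ginf (gabs r) (gabs s)))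
       \<and> (\<forall>r \<in> (K_sm :: (real \<Rightarrow> complex) set set). \<forall>s \<in> K_sm.
            ideal_sum (principal r) (principal s) = principal (gadd (gabs r) (gabs s))
          \<and> principal (gadd (gabs r) (gabs s)) = principal (gsup (gabs r) (gabs s))
          \<and> principal r \<inter> principal s = principal (ginf (gabs r) (gabs s)))"
  using main_gen[OF real_inst(1) real_inst(1) real_inst(2-4)]
    main_gen[OF complex_inst]
  by blast


end
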